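(* Let $\varepsilon>0$, $\theta_0>0$, $\Delta t>0$, $N\in\mathbb{N}$, $h=L/N$, and assume the mobility is constant, $\mathcal{M}\equiv1$. Consider the scheme: given $\phi^n\in\mathcal{C}_{\rm per}$, find $\phi^{n+1},\mu^{n+1}\in\mathcal{C}_{\rm per}$ with $$\frac{\phi^{n+1}-\phi^n}{\Delta t}=\Delta_h\mu^{n+1},\qquad \mu^{n+1}=\ln(1+\phi^{n+1})-\ln(1-\phi^{n+1})-\theta_0\phi^n-\varepsilon^2\Delta_h\phi^{n+1}.$$ Given $\phi^n\in\mathcal{C}_{\rm per}$ with $\|\phi^n\|_\infty\le M$ for some $M>0$ and $|\overline{\phi^n}|<1$, there exists a unique solution $\phi^{n+1}\in\mathcal{C}_{\rm per}$ of this scheme with $\phi^{n+1}-\overline{\phi^n}\in\mathring{\mathcal{C}}_{\rm per}$ and $\|\phi^{n+1}\|_\infty<1$.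
   Context: $\Omega=(0,L)^3$, periodic. Grid points $p_i=(i-\tfrac12)h$, $h=L/N$. $\mathcal{C}_{\rm per}$ is the space of real $N$-periodic grid functions $\nu_{i,j,k}$ on cell centers $(p_i,p_j,p_k)$. Inner product $\langle\nu,\xi\rangle=h^3\sum_{i,j,k=1}^N\nu_{i,j,k}\xi_{i,j,k}$; mean $\overline{\nu}=|\Omega|^{-1}\langle\nu,1\rangle$; $\mathring{\mathcal{C}}_{\rm per}=\{\nu\in\mathcal{C}_{\rm per}:\overline{\nu}=0\}$. $\Delta_h\nu_{i,j,k}=h^{-2}(\nu_{i+1,j,k}+\nu_{i-1,j,k}+\nu_{i,j+1,k}+\nu_{i,j-1,k}+\nu_{i,j,k+1}+\nu_{i,j,k-1}-6\nu_{i,j,k})$. $\|\nu\|_\infty=\max_{i,j,k}|\nu_{i,j,k}|$. Logarithms are applied pointwise. *)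

theory Defs
  imports Complex_Main
begin

text \<open>Grid functions on cell centres, indexed by integer triples; the space C_per
consists of those that are N-periodic in each index. The fundamental cell is {1..N}^3.\<close>

type_synonym grid = "int \<Rightarrow> int \<Rightarrow> int \<Rightarrow> real"

definition Cper :: "nat \<Rightarrow> grid set" where
  "Cper N = {\<nu>. \<forall>i j k. \<nu> (i + int N) j k = \<nu> i j k \<and> \<nu> i (j + int N) k = \<nu> i j k
                          \<and> \<nu> i j (k + int N) = \<nu> i j k}"

definition cells :: "nat \<Rightarrow> (int \<times> int \<times> int) set" where
  "cells N = {1..int N} \<times> {1..int N} \<times> {1..int N}"

definition gridh :: "nat \<Rightarrow> real \<Rightarrow> real" where
  "gridh N L = L / real N"

definition ip :: "nat \<Rightarrow> real \<Rightarrow> grid \<Rightarrow> grid \<Rightarrow> real" where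
  "ip N L \<nu> \<xi> = (gridh N L)^3 * (\<Sum>(i,j,k)\<in>cells N. \<nu> i j k * \<xi> i j k)"

definition gmean :: "nat \<Rightarrow> real \<Rightarrow> grid \<Rightarrow> real" where
  "gmean N L \<nu> = ip N L \<nu> (\<lambda>_ _ _. 1) / L^3"

definition Cper0 :: "nat \<Rightarrow> real \<Rightarrow> grid set" where
  "Cper0 N L = {\<nu> \<in> Cper N. gmean N L \<nu> = 0}"

definition lap :: "nat \<Rightarrow> real \<Rightarrow> grid \<Rightarrow> grid" where
  "lap N L \<nu> = (\<lambda>i j k. (\<nu> (i+1) j k + \<nu> (i-1) j k + \<nu> i (j+1) k + \<nu> i (j-1) k
       + \<nu> i j (k+1) + \<nu> i j (k-1) - 6 * \<nu> i j k) / (gridh N L)^2)"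

definition supnorm :: "nat \<Rightarrow> grid \<Rightarrow> real" where
  "supnorm N \<nu> = Max ((\<lambda>(i,j,k). \<bar>\<nu> i j k\<bar>) ` cells N)"

definition scheme :: "nat \<Rightarrow> real \<Rightarrow> real \<Rightarrow> real \<Rightarrow> real \<Rightarrow> grid \<Rightarrow> grid \<Rightarrow> grid \<Rightarrow> bool" where
  "scheme N L \<epsilon> \<theta>\<^sub>0 dt \<phi>0 \<phi>1 \<mu>1 \<longleftrightarrow>
     (\<forall>i j k. (\<phi>1 i j k - \<phi>0 i j k) / dt = lap N L \<mu>1 i j k) \<and>
     (\<forall>i j k. \<mu>1 i j k = ln (1 + \<phi>1 i j k) - ln (1 - \<phi>1 i j k) - \<theta>\<^sub>0 * \<phi>0 i j k
                        - \<epsilon>^2 * lap N L \<phi>1 i j k)"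

end

theory Submission
  imports Defs "HOL-Analysis.Analysis" "HOL-Real_Asymp.Real_Asymp"
begin


definition S :: "nat \<Rightarrow> grid \<Rightarrow> real" where
  "S N f = (\<Sum>(i,j,k)\<in>cells N. f i j k)"

lemma S_nested: "S N f = (\<Sum>i\<in>{1..int N}. \<Sum>j\<in>{1..int N}. \<Sum>k\<in>{1..int N}. f i j k)"
  unfolding S_def cells_def by (simp add: sum.cartesian_product)

lemma per1d_nat:
  fixes g :: "int \<Rightarrow> 'a"
  assumes "\<And>x. g (x + int N) = g x"
  shows "g (x + int N * int q) = g x"
proof (induction q)
  case 0 then show ?case by simp
next
  case (Suc q)
  have "g (x + int N * int (Suc q)) = g ((x + int N * int q) + int N)" by (simp add: algebra_simps)
  also have "\<dots> = g x" using assms Suc by simp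
  finally show ?case .
qed

lemma per1d:
  fixes g :: "int \<Rightarrow> 'a"
  assumes "\<And>x. g (x + int N) = g x"
  shows "g (x + int N * q) = g x"
proof (cases "q \<ge> 0")
  case True
  then obtain n where "q = int n" using nonneg_int_cases by blast
  then show ?thesis using per1d_nat[of g, OF assms] by simp
next
  case False
  define n where "n = nat (- q)"
  have q: "q = - int n" using False n_def by simp
  have "g x = g ((x + int N * q) + int N * int n)" using q by simp
  also have "\<dots> = g (x + int N * q)" using per1d_nat[of g, OF assms] by blast
  finally show ?thesis by simp
qed

definition rep :: "nat \<Rightarrow> int \<Rightarrow> int" where "rep N i = (i - 1) mod int N + 1"

lemma rep_range: "N > 0 \<Longrightarrow> rep N i \<in> {1..int N}"
  unfolding rep_def by (simp add: pos_mod_bound pos_mod_sign less_le_trans[of 0] add1_zle_eq)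

lemma rep_eq: "i = rep N i + int N * ((i - 1) div int N)"
  unfolding rep_def using mod_mult_div_eq[of "i - 1" "int N"] by linarith

lemma per1d_rep:
  fixes g :: "int \<Rightarrow> 'a"
  assumes "\<And>x. g (x + int N) = g x"
  shows "g i = g (rep N i)"
  by (subst rep_eq[of i N]) (rule per1d[of g, OF assms])

lemma cper_rep:
  assumes "u \<in> Cper N"
  shows "u i j k = u (rep N i) (rep N j) (rep N k)"
proof -
  have a: "\<And>i j k. u (i + int N) j k = u i j k" "\<And>i j k. u i (j + int N) k = u i j k"
     "\<And>i j k. u i j (k + int N) = u i j k" using assms unfolding Cper_def by auto
  have "u i j k = u (rep N i) j k" by (rule per1d_rep[of "\<lambda>i. u i j k"]) (rule a(1))
  also have "\<dots> = u (rep N i) (rep N j) k" by (rule per1d_rep[of "\<lambda>j. u (rep N i) j k"]) (rule a(2))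
  also have "\<dots> = u (rep N i) (rep N j) (rep N k)" by (rule per1d_rep[of "\<lambda>k. u (rep N i) (rep N j) k"]) (rule a(3))
  finally show ?thesis .
qed

lemma rep_cells: "N > 0 \<Longrightarrow> (rep N i, rep N j, rep N k) \<in> cells N"
  using rep_range unfolding cells_def by auto

lemma cper_zero:
  assumes "u \<in> Cper N" "N > 0" "\<forall>(i,j,k)\<in>cells N. u i j k = 0"
  shows "u i j k = 0"
  using cper_rep[OF assms(1)] rep_cells[OF assms(2)] assms(3) by fastforce

lemma cper_eq:
  assumes "u \<in> Cper N" "v \<in> Cper N" "N > 0" "\<forall>(i,j,k)\<in>cells N. u i j k = v i j k"
  shows "u = v"
proof (intro ext)
  fix i j k
  show "u i j k = v i j k"
    using cper_rep[OF assms(1), of i j k] cper_rep[OF assms(2), of i j k] rep_cells[OF assms(3)] assms(4)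
    by fastforce
qed

lemma telescope_int:
  fixes g :: "int \<Rightarrow> real"
  shows "(\<Sum>i\<in>{1..int n}. g (i + 1) - g i) = g (int n + 1) - g 1"
proof (induction n)
  case 0 then show ?case by simp
next
  case (Suc n)
  have "{1..int (Suc n)} = insert (int n + 1) {1..int n}" by auto
  then show ?case using Suc by simp
qed

lemma sum_shift1:
  fixes g :: "int \<Rightarrow> real"
  assumes "\<And>x. g (x + int N) = g x"
  shows "(\<Sum>i\<in>{1..int N}. g (i + 1)) = (\<Sum>i\<in>{1..int N}. g i)"
proof -
  have "(\<Sum>i\<in>{1..int N}. g (i + 1)) - (\<Sum>i\<in>{1..int N}. g i) = (\<Sum>i\<in>{1..int N}. g (i + 1) - g i)"
    by (simp add: sum_subtractf)
  also have "\<dots> = g (int N + 1) - g 1" by (rule telescope_int)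
  also have "\<dots> = 0" using assms[of 1] by (simp add: add.commute)
  finally show ?thesis by simp
qed

lemma per_translate:
  fixes g :: "int \<Rightarrow> 'a"
  assumes "\<And>x. g (x + int N) = g x"
  shows "g (x + int N + a) = g (x + a)"
  using assms[of "x + a"] by (simp add: ac_simps)

lemma sum_shift_nat:
  fixes g :: "int \<Rightarrow> real"
  assumes "\<And>x. g (x + int N) = g x"
  shows "(\<Sum>i\<in>{1..int N}. g (i + int a)) = (\<Sum>i\<in>{1..int N}. g i)"
proof (induction a)
  case 0 then show ?case by simp
next
  case (Suc a)
  have "(\<Sum>i\<in>{1..int N}. g (i + int (Suc a))) = (\<Sum>i\<in>{1..int N}. (\<lambda>x. g (x + int a)) (i + 1))"
    by (simp add: algebra_simps)
  also have "\<dots> = (\<Sum>i\<in>{1..int N}. g (i + int a))"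
    by (rule sum_shift1[of "\<lambda>x. g (x + int a)"]) (rule per_translate[of g, OF assms])
  finally show ?case using Suc by simp
qed

lemma sum_shift:
  fixes g :: "int \<Rightarrow> real"
  assumes "\<And>x. g (x + int N) = g x"
  shows "(\<Sum>i\<in>{1..int N}. g (i + a)) = (\<Sum>i\<in>{1..int N}. g i)"
proof (cases "a \<ge> 0")
  case True
  then obtain n where "a = int n" using nonneg_int_cases by blast
  then show ?thesis using sum_shift_nat[of g, OF assms] by simp
next
  case False
  define n where "n = nat (- a)"
  have q: "a = - int n" using False n_def by simp
  have "(\<Sum>i\<in>{1..int N}. g (i + a)) = (\<Sum>i\<in>{1..int N}. (\<lambda>x. g (x + a)) (i + int n))"
    by (rule sum_shift_nat[symmetric]) (rule per_translate[of g, OF assms])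
  also have "\<dots> = (\<Sum>i\<in>{1..int N}. g i)" using q by simp
  finally show ?thesis .
qed

lemma S_shift:
  assumes "f \<in> Cper N"
  shows "S N (\<lambda>i j k. f (i + a) (j + b) (k + c)) = S N f"
proof -
  have a: "\<And>i j k. f (i + int N) j k = f i j k" "\<And>i j k. f i (j + int N) k = f i j k"
     "\<And>i j k. f i j (k + int N) = f i j k" using assms unfolding Cper_def by auto
  have "S N (\<lambda>i j k. f (i + a) (j + b) (k + c)) =
     (\<Sum>i\<in>{1..int N}. \<Sum>j\<in>{1..int N}. \<Sum>k\<in>{1..int N}. f (i + a) (j + b) (k + c))"
    by (simp add: S_nested)
  also have "\<dots> = (\<Sum>i\<in>{1..int N}. \<Sum>j\<in>{1..int N}. \<Sum>k\<in>{1..int N}. f (i + a) (j + b) k)"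
    by (rule sum.cong[OF refl], rule sum.cong[OF refl], rule sum_shift) (simp add: a)
  also have "\<dots> = (\<Sum>i\<in>{1..int N}. \<Sum>j\<in>{1..int N}. \<Sum>k\<in>{1..int N}. f (i + a) j k)"
    by (rule sum.cong[OF refl], rule sum_shift[of "\<lambda>j. \<Sum>k\<in>{1..int N}. f _ j k"]) (simp add: a)
  also have "\<dots> = (\<Sum>i\<in>{1..int N}. \<Sum>j\<in>{1..int N}. \<Sum>k\<in>{1..int N}. f i j k)"
    by (rule sum_shift[of "\<lambda>i. \<Sum>j\<in>{1..int N}. \<Sum>k\<in>{1..int N}. f i j k"]) (simp add: a)
  finally show ?thesis by (simp only: S_nested)
qed


lemma cper_i: "a \<in> Cper N \<Longrightarrow> a (x + int N) y z = a x y z" unfolding Cper_def by auto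
lemma cper_j: "a \<in> Cper N \<Longrightarrow> a x (y + int N) z = a x y z" unfolding Cper_def by auto
lemma cper_k: "a \<in> Cper N \<Longrightarrow> a x y (z + int N) = a x y z" unfolding Cper_def by auto

lemma cper_i': "a \<in> Cper N \<Longrightarrow> x' = x + int N \<Longrightarrow> a x' y z = a x y z" using cper_i by metis
lemma cper_j': "a \<in> Cper N \<Longrightarrow> y' = y + int N \<Longrightarrow> a x y' z = a x y z" using cper_j by metis
lemma cper_k': "a \<in> Cper N \<Longrightarrow> z' = z + int N \<Longrightarrow> a x y z' = a x y z" using cper_k by metis

lemma cper_shift:
  assumes "a \<in> Cper N" shows "(\<lambda>i j k. a (i+p) (j+q) (k+r)) \<in> Cper N"
  unfolding Cper_def
proof (intro CollectI allI conjI)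
  fix i j k
  show "a (i + int N + p) (j + q) (k + r) = a (i + p) (j + q) (k + r)"
    using cper_i[OF assms, of "i+p"] by (simp add: ac_simps)
  show "a (i + p) (j + int N + q) (k + r) = a (i + p) (j + q) (k + r)"
    using cper_j[OF assms, of _ "j+q"] by (simp add: ac_simps)
  show "a (i + p) (j + q) (k + int N + r) = a (i + p) (j + q) (k + r)"
    using cper_k[OF assms, of _ _ "k+r"] by (simp add: ac_simps)
qed

lemma cper_fun2:
  assumes "a \<in> Cper N" "b \<in> Cper N" shows "(\<lambda>i j k. f (a i j k) (b i j k)) \<in> Cper N"
  using assms unfolding Cper_def by auto

lemma cper_fun1:
  assumes "a \<in> Cper N" shows "(\<lambda>i j k. f (a i j k)) \<in> Cper N"
  using assms unfolding Cper_def by auto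

lemma cper_const: "(\<lambda>i j k. c) \<in> Cper N" unfolding Cper_def by auto

lemma cper_mult: "a \<in> Cper N \<Longrightarrow> b \<in> Cper N \<Longrightarrow> (\<lambda>i j k. a i j k * b i j k) \<in> Cper N"
  by (rule cper_fun2)
lemma cper_add: "a \<in> Cper N \<Longrightarrow> b \<in> Cper N \<Longrightarrow> (\<lambda>i j k. a i j k + b i j k) \<in> Cper N"
  by (rule cper_fun2)
lemma cper_diff: "a \<in> Cper N \<Longrightarrow> b \<in> Cper N \<Longrightarrow> (\<lambda>i j k. a i j k - b i j k) \<in> Cper N"
  by (rule cper_fun2)

lemma lap_per: assumes "u \<in> Cper N" shows "lap N L u \<in> Cper N"
proof -
  have e: "\<And>x y z. u (x + int N - 1) y z = u (x - 1) y z" "\<And>x y z. u (x + (1 + int N)) y z = u (x + 1) y z"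
    "\<And>x y z. u x (y + int N - 1) z = u x (y - 1) z" "\<And>x y z. u x (y + (1 + int N)) z = u x (y + 1) z"
    "\<And>x y z. u x y (z + int N - 1) = u x y (z - 1)" "\<And>x y z. u x y (z + (1 + int N)) = u x y (z + 1)"
    by ((rule cper_i'[OF assms], simp) | (rule cper_j'[OF assms], simp) | (rule cper_k'[OF assms], simp))+
  show ?thesis
    using cper_i[OF assms] cper_j[OF assms] cper_k[OF assms] unfolding Cper_def lap_def
    by (auto simp: ac_simps e)
qed

lemma lap_lin: "lap N L (\<lambda>i j k. u i j k + t * v i j k) = (\<lambda>i j k. lap N L u i j k + t * lap N L v i j k)"
  unfolding lap_def by (intro ext) (cases "gridh N L = 0"; simp add: field_simps)

lemma lap_const: "lap N L (\<lambda>i j k. u i j k + c) = lap N L u"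
  unfolding lap_def by (intro ext) (cases "gridh N L = 0"; simp add: field_simps)

lemma lap_neg: "lap N L (\<lambda>i j k. - u i j k) = (\<lambda>i j k. - lap N L u i j k)"
  unfolding lap_def by (intro ext) (cases "gridh N L = 0"; simp add: field_simps)

lemma lap_diff: "lap N L (\<lambda>i j k. u i j k - v i j k) = (\<lambda>i j k. lap N L u i j k - lap N L v i j k)"
  unfolding lap_def by (intro ext) (cases "gridh N L = 0"; simp add: field_simps)

lemma S_add: "S N (\<lambda>i j k. f i j k + g i j k) = S N f + S N g"
  unfolding S_def by (simp add: sum.distrib split_def)
lemma S_diff: "S N (\<lambda>i j k. f i j k - g i j k) = S N f - S N g"
  unfolding S_def by (simp add: sum_subtractf split_def)
lemma S_cmult: "S N (\<lambda>i j k. c * f i j k) = c * S N f"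
  unfolding S_def by (simp add: sum_distrib_left split_def)
lemma S_neg: "S N (\<lambda>i j k. - f i j k) = - S N f"
  unfolding S_def by (simp add: sum_negf split_def)
lemma S_divide: "S N (\<lambda>i j k. f i j k / c) = S N f / c"
  unfolding S_def by (simp add: sum_divide_distrib split_def)
lemma S_cong: "(\<And>i j k. (i,j,k) \<in> cells N \<Longrightarrow> f i j k = g i j k) \<Longrightarrow> S N f = S N g"
  unfolding S_def by (intro sum.cong) auto
lemma S_mono: "(\<And>i j k. (i,j,k) \<in> cells N \<Longrightarrow> f i j k \<le> g i j k) \<Longrightarrow> S N f \<le> S N g"
  unfolding S_def by (intro sum_mono) auto
lemma S_nonneg: "(\<And>i j k. (i,j,k) \<in> cells N \<Longrightarrow> 0 \<le> f i j k) \<Longrightarrow> 0 \<le> S N f"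
  unfolding S_def by (intro sum_nonneg) auto
lemma finite_cells: "finite (cells N)" unfolding cells_def by simp
lemma card_cells: "card (cells N) = N^3" unfolding cells_def by (simp add: card_cartesian_product power3_eq_cube)
lemma S_const: "S N (\<lambda>i j k. c) = real N ^ 3 * c"
  unfolding S_def by (simp add: split_def card_cells)

lemma S_lap: assumes "u \<in> Cper N" shows "S N (lap N L u) = 0"
proof -
  let ?h = "(gridh N L)^2"
  have "S N (lap N L u) = (S N (\<lambda>i j k. u (i+1) (j+0) (k+0)) + S N (\<lambda>i j k. u (i+(-1)) (j+0) (k+0))
     + S N (\<lambda>i j k. u (i+0) (j+1) (k+0)) + S N (\<lambda>i j k. u (i+0) (j+(-1)) (k+0))
     + S N (\<lambda>i j k. u (i+0) (j+0) (k+1)) + S N (\<lambda>i j k. u (i+0) (j+0) (k+(-1))) - 6 * S N u) / ?h"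
    unfolding lap_def S_divide[symmetric] S_add[symmetric] S_diff[symmetric] S_cmult[symmetric] by simp
  also have "\<dots> = 0" by (simp only: S_shift[OF assms]) simp
  finally show ?thesis .
qed


definition Sab :: "nat \<Rightarrow> grid \<Rightarrow> grid \<Rightarrow> int \<Rightarrow> int \<Rightarrow> int \<Rightarrow> real" where
  "Sab N a b p q r = S N (\<lambda>i j k. a i j k * b (i+p) (j+q) (k+r))"

lemma Sab_swap:
  assumes "a \<in> Cper N" "b \<in> Cper N"
  shows "Sab N a b p q r = Sab N b a (-p) (-q) (-r)"
proof -
  let ?f = "\<lambda>i j k. b i j k * a (i + -p) (j + -q) (k + -r)"
  have f: "?f \<in> Cper N" by (intro cper_mult assms(2) cper_shift assms(1))
  have "Sab N b a (-p) (-q) (-r) = S N ?f" unfolding Sab_def by simp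
  also have "\<dots> = S N (\<lambda>i j k. ?f (i+p) (j+q) (k+r))" by (rule S_shift[OF f, symmetric])
  also have "\<dots> = Sab N a b p q r" unfolding Sab_def by (simp add: mult.commute)
  finally show ?thesis by simp
qed

lemma S_lap_expand:
  "S N (\<lambda>i j k. a i j k * lap N L b i j k) = (Sab N a b 1 0 0 + Sab N a b (-1) 0 0 + Sab N a b 0 1 0
     + Sab N a b 0 (-1) 0 + Sab N a b 0 0 1 + Sab N a b 0 0 (-1) - 6 * Sab N a b 0 0 0) / (gridh N L)^2"
proof -
  have "(Sab N a b 1 0 0 + Sab N a b (-1) 0 0 + Sab N a b 0 1 0
     + Sab N a b 0 (-1) 0 + Sab N a b 0 0 1 + Sab N a b 0 0 (-1) - 6 * Sab N a b 0 0 0) / (gridh N L)^2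
    = S N (\<lambda>i j k. (a i j k * b (i+1) (j+0) (k+0) + a i j k * b (i+(-1)) (j+0) (k+0) + a i j k * b (i+0) (j+1) (k+0)
     + a i j k * b (i+0) (j+(-1)) (k+0) + a i j k * b (i+0) (j+0) (k+1) + a i j k * b (i+0) (j+0) (k+(-1))
     - 6 * (a i j k * b (i+0) (j+0) (k+0))) / (gridh N L)^2)"
    unfolding Sab_def by (simp only: S_add S_diff S_cmult S_divide)
  also have "\<dots> = S N (\<lambda>i j k. a i j k * lap N L b i j k)"
    by (intro S_cong) (cases "gridh N L = 0"; simp add: lap_def field_simps)
  finally show ?thesis by simp
qed

lemma S_sym:
  assumes "a \<in> Cper N" "b \<in> Cper N"
  shows "S N (\<lambda>i j k. a i j k * lap N L b i j k) = S N (\<lambda>i j k. b i j k * lap N L a i j k)"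
proof -
  have "Sab N a b 1 0 0 = Sab N b a (-1) 0 0" "Sab N a b (-1) 0 0 = Sab N b a 1 0 0"
    "Sab N a b 0 1 0 = Sab N b a 0 (-1) 0" "Sab N a b 0 (-1) 0 = Sab N b a 0 1 0"
    "Sab N a b 0 0 1 = Sab N b a 0 0 (-1)" "Sab N a b 0 0 (-1) = Sab N b a 0 0 1"
    "Sab N a b 0 0 0 = Sab N b a 0 0 0"
    using Sab_swap[OF assms, of 1 0 0] Sab_swap[OF assms, of "-1" 0 0] Sab_swap[OF assms, of 0 1 0]
    Sab_swap[OF assms, of 0 "-1" 0] Sab_swap[OF assms, of 0 0 1] Sab_swap[OF assms, of 0 0 "-1"]
    Sab_swap[OF assms, of 0 0 0] by simp_all
  then show ?thesis unfolding S_lap_expand by (simp only:) (simp add: algebra_simps)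
qed

definition Dir :: "nat \<Rightarrow> grid \<Rightarrow> int \<Rightarrow> int \<Rightarrow> int \<Rightarrow> real" where
  "Dir N z p q r = S N (\<lambda>i j k. (z (i+p) (j+q) (k+r) - z i j k)^2)"

lemma Dir_eq:
  assumes "z \<in> Cper N"
  shows "Dir N z p q r = 2 * Sab N z z 0 0 0 - 2 * Sab N z z p q r"
proof -
  have sq: "(\<lambda>i j k. (z i j k)^2) \<in> Cper N" by (rule cper_fun1[OF assms])
  have 1: "Dir N z p q r = S N (\<lambda>i j k. (z (i+p) (j+q) (k+r))^2 + (z i j k)^2 - 2 * (z i j k * z (i+p) (j+q) (k+r)))"
    unfolding Dir_def by (rule S_cong) (simp add: power2_diff algebra_simps)
  have 2: "\<dots> = S N (\<lambda>i j k. (z (i+p) (j+q) (k+r))^2) + S N (\<lambda>i j k. (z i j k)^2) - 2 * Sab N z z p q r"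
    by (simp only: S_add S_diff S_cmult Sab_def)
  have 3: "S N (\<lambda>i j k. (z (i+p) (j+q) (k+r))^2) = S N (\<lambda>i j k. (z i j k)^2)"
    using S_shift[OF sq, of p q r] by simp
  have 4: "Sab N z z 0 0 0 = S N (\<lambda>i j k. (z i j k)^2)" unfolding Sab_def by (simp add: power2_eq_square)
  show ?thesis using 1 2 3 4 by linarith
qed

lemma S_energy:
  assumes "z \<in> Cper N"
  shows "S N (\<lambda>i j k. z i j k * lap N L z i j k) = - (Dir N z 1 0 0 + Dir N z 0 1 0 + Dir N z 0 0 1) / (gridh N L)^2"
proof -
  have "Sab N z z (-1) 0 0 = Sab N z z 1 0 0" "Sab N z z 0 (-1) 0 = Sab N z z 0 1 0"
    "Sab N z z 0 0 (-1) = Sab N z z 0 0 1"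
    using Sab_swap[OF assms assms, of 1 0 0] Sab_swap[OF assms assms, of 0 1 0] Sab_swap[OF assms assms, of 0 0 1]
    by simp_all
  then show ?thesis unfolding S_lap_expand Dir_eq[OF assms] by (simp only:) (simp add: algebra_simps)
qed

lemma Dir_nonneg: "0 \<le> Dir N z p q r" unfolding Dir_def by (rule S_nonneg) simp

lemma S_energy_nonpos:
  assumes "z \<in> Cper N"
  shows "S N (\<lambda>i j k. z i j k * lap N L z i j k) \<le> 0"
proof -
  have "0 \<le> Dir N z 1 0 0 + Dir N z 0 1 0 + Dir N z 0 0 1" using Dir_nonneg[of N z] by (simp add: add_nonneg_nonneg)
  then show ?thesis unfolding S_energy[OF assms] by (intro divide_nonpos_nonneg) auto
qed


lemma bw_finite:
  fixes U :: "nat \<Rightarrow> 'p \<Rightarrow> real"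
  assumes "finite C" "\<And>n p. p \<in> C \<Longrightarrow> \<bar>U n p\<bar> \<le> B"
  shows "\<exists>r l. strict_mono r \<and> (\<forall>p\<in>C. (\<lambda>n. U (r n) p) \<longlonglongrightarrow> l p)"
  using assms
proof (induction C rule: finite_induct)
  case empty
  show ?case by (rule exI[of _ id]) (auto simp: strict_mono_def)
next
  case (insert a C)
  then obtain r l where r: "strict_mono r" "\<forall>p\<in>C. (\<lambda>n. U (r n) p) \<longlonglongrightarrow> l p" by auto
  have "bounded (range (\<lambda>n. U (r n) a))"
    unfolding bounded_iff using insert.prems by auto
  then obtain la s where s: "strict_mono s" "((\<lambda>n. U (r n) a) \<circ> s) \<longlonglongrightarrow> la"
    using bounded_imp_convergent_subsequence by blast
  have "strict_mono (r \<circ> s)" by (rule strict_mono_o[OF r(1) s(1)])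
  moreover have "\<forall>p\<in>insert a C. (\<lambda>n. U ((r \<circ> s) n) p) \<longlonglongrightarrow> (l(a := la)) p"
  proof
    fix p assume p: "p \<in> insert a C"
    show "(\<lambda>n. U ((r \<circ> s) n) p) \<longlonglongrightarrow> (l(a := la)) p"
    proof (cases "p = a")
      case True then show ?thesis using s(2) by (simp add: comp_def)
    next
      case False
      then have "p \<in> C" using p by simp
      then have "((\<lambda>n. U (r n) p) \<circ> s) \<longlonglongrightarrow> l p" using r(2) LIMSEQ_subseq_LIMSEQ s(1) by blast
      then show ?thesis using False by (simp add: comp_def)
    qed
  qed
  ultimately show ?case by blast
qed

lemma rep_period: "N > 0 \<Longrightarrow> rep N (i + int N) = rep N i"
proof -
  have "i + int N - 1 = (i - 1) + int N" by simp
  then show ?thesis unfolding rep_def by (simp only: mod_add_self2)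
qed

lemma grid_subseq:
  fixes U :: "nat \<Rightarrow> grid"
  assumes N: "N > 0" and U: "\<And>n. U n \<in> Cper N"
    and B: "\<And>n i j k. (i,j,k) \<in> cells N \<Longrightarrow> \<bar>U n i j k\<bar> \<le> B"
  shows "\<exists>r u. strict_mono r \<and> u \<in> Cper N \<and> (\<forall>i j k. (\<lambda>n. U (r n) i j k) \<longlonglongrightarrow> u i j k)"
proof -
  have fin: "finite (cells N)" unfolding cells_def by simp
  have b: "\<bar>(\<lambda>(i,j,k). U n i j k) p\<bar> \<le> B" if "p \<in> cells N" for n p
  proof -
    obtain i j k where "p = (i,j,k)" by (cases p) auto
    then show ?thesis using B[of i j k n] that by simp
  qed
  have "\<exists>r l. strict_mono r \<and> (\<forall>p\<in>cells N. (\<lambda>n. (\<lambda>(i,j,k). U (r n) i j k) p) \<longlonglongrightarrow> l p)"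
    by (rule bw_finite[OF fin]) (rule b)
  then obtain r l where r: "strict_mono r" "\<forall>p\<in>cells N. (\<lambda>n. (\<lambda>(i,j,k). U (r n) i j k) p) \<longlonglongrightarrow> l p"
    by blast
  define u where "u = (\<lambda>i j k. l (rep N i, rep N j, rep N k))"
  have "u \<in> Cper N" unfolding Cper_def u_def using rep_period[OF N] by simp
  moreover have "(\<lambda>n. U (r n) i j k) \<longlonglongrightarrow> u i j k" for i j k
  proof -
    have "(\<lambda>n. U (r n) i j k) = (\<lambda>n. (\<lambda>(i,j,k). U (r n) i j k) (rep N i, rep N j, rep N k))"
      using cper_rep[OF U] by simp
    moreover have "(\<lambda>n. (\<lambda>(i,j,k). U (r n) i j k) (rep N i, rep N j, rep N k)) \<longlonglongrightarrow> l (rep N i, rep N j, rep N k)"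
      using r(2) rep_cells[OF N] by blast
    ultimately show ?thesis unfolding u_def by simp
  qed
  ultimately show ?thesis using r(1) by blast
qed

lemma exists_min:
  fixes J :: "grid \<Rightarrow> real" and Q :: "grid \<Rightarrow> bool" and u0 :: grid
  assumes N: "N > 0"
    and inv: "\<And>u c. u \<in> Cper N \<Longrightarrow> Q u \<Longrightarrow> Q (\<lambda>i j k. u i j k + c) \<and> J (\<lambda>i j k. u i j k + c) = J u"
    and u0: "u0 \<in> Cper N" "Q u0"
    and bnd: "\<And>u i j k. u \<in> Cper N \<Longrightarrow> Q u \<Longrightarrow> u 1 1 1 = 0 \<Longrightarrow> J u \<le> J u0 \<Longrightarrow> (i,j,k) \<in> cells N
                 \<Longrightarrow> \<bar>u i j k\<bar> \<le> B"
    and cont: "\<And>U u. (\<And>n. U n \<in> Cper N) \<Longrightarrow> (\<And>n. Q (U n)) \<Longrightarrow> u \<in> Cper N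
                 \<Longrightarrow> (\<And>i j k. (\<lambda>n. U n i j k) \<longlonglongrightarrow> u i j k) \<Longrightarrow> Q u \<and> (\<lambda>n. J (U n)) \<longlonglongrightarrow> J u"
  shows "\<exists>u. u \<in> Cper N \<and> Q u \<and> (\<forall>w. w \<in> Cper N \<longrightarrow> Q w \<longrightarrow> J u \<le> J w)"
proof -
  define T where "T = {u. u \<in> Cper N \<and> Q u \<and> u 1 1 1 = 0 \<and> J u \<le> J u0}"
  have seqc: "\<exists>r u. strict_mono r \<and> u \<in> T \<and> (\<lambda>n. J (U (r n))) \<longlonglongrightarrow> J u" if UT: "\<And>n. U n \<in> T" for U :: "nat \<Rightarrow> grid"
  proof -
    have UC: "U n \<in> Cper N" "Q (U n)" "U n 1 1 1 = 0" "J (U n) \<le> J u0" for n using UT[of n] unfolding T_def by auto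
    obtain r u where ru: "strict_mono r" "u \<in> Cper N" "\<And>i j k. (\<lambda>n. U (r n) i j k) \<longlonglongrightarrow> u i j k"
    proof -
      have Ub: "\<bar>U n i j k\<bar> \<le> B" if "(i,j,k) \<in> cells N" for n i j k
        using bnd[OF UC(1) UC(2) UC(3) UC(4) that] .
      show ?thesis using grid_subseq[of N U B, OF N UC(1) Ub] that by blast
    qed
    have c: "Q u \<and> (\<lambda>n. J (U (r n))) \<longlonglongrightarrow> J u"
      by (rule cont[of "\<lambda>n. U (r n)"]) (use UC ru in auto)
    have "(\<lambda>n. U (r n) 1 1 1) \<longlonglongrightarrow> u 1 1 1" by (rule ru(3))
    then have "u 1 1 1 = 0" using UC(3) by (simp add: LIMSEQ_const_iff)
    moreover have "J u \<le> J u0" using c UC(4) by (intro LIMSEQ_le_const2[of "\<lambda>n. J (U (r n))"]) auto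
    ultimately have "u \<in> T" using ru(2) c unfolding T_def by auto
    then show ?thesis using ru(1) c by blast
  qed
  define u0' where "u0' = (\<lambda>i j k. u0 i j k + (- u0 1 1 1))"
  have u0'T: "u0' \<in> T" unfolding T_def u0'_def using inv[OF u0, of "- u0 1 1 1"] u0 cper_fun1[of u0 N "\<lambda>x. x + - u0 1 1 1"]
    by auto
  have bdd: "bdd_below (J ` T)"
  proof (rule ccontr)
    assume "\<not> bdd_below (J ` T)"
    then have "\<forall>n::nat. \<exists>u\<in>T. J u < - real n" unfolding bdd_below_def
      by (metis (no_types, lifting) imageE not_le)
    then obtain U where U: "\<And>n. U n \<in> T" "\<And>n. J (U n) < - real n" by metis
    have "\<exists>r u. strict_mono r \<and> u \<in> T \<and> (\<lambda>n. J (U (r n))) \<longlonglongrightarrow> J u" by (rule seqc) (rule U(1))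
    then obtain r u where ru: "strict_mono r" "(\<lambda>n. J (U (r n))) \<longlonglongrightarrow> J u" by blast
    obtain K where K: "K > 0" "\<And>n. norm (J (U (r n))) \<le> K" using convergent_imp_Bseq[OF convergentI[OF ru(2)]] unfolding Bseq_def by blast
    define n where "n = nat (ceiling K)"
    have "J (U (r n)) < - real (r n)" by (rule U(2))
    also have "\<dots> \<le> - real n" using seq_suble[OF ru(1), of n] by simp
    also have "\<dots> \<le> - K" unfolding n_def by linarith
    finally show False using K(2)[of n] by simp
  qed
  define m where "m = Inf (J ` T)"
  have "\<forall>n::nat. \<exists>u\<in>T. J u < m + 1 / real (Suc n)"
  proof
    fix n :: nat
    have "Inf (J ` T) < m + 1 / real (Suc n)" unfolding m_def by simp
    moreover have "J ` T \<noteq> {}" using u0'T by blast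
    ultimately have "\<exists>y\<in>J ` T. y < m + 1 / real (Suc n)" by (intro cInf_lessD)
    then show "\<exists>u\<in>T. J u < m + 1 / real (Suc n)" by simp
  qed
  then obtain U where U: "\<And>n. U n \<in> T" "\<And>n. J (U n) < m + 1 / real (Suc n)" by metis
  have "\<exists>r u. strict_mono r \<and> u \<in> T \<and> (\<lambda>n. J (U (r n))) \<longlonglongrightarrow> J u" by (rule seqc) (rule U(1))
  then obtain r u where ru: "strict_mono r" "u \<in> T" "(\<lambda>n. J (U (r n))) \<longlonglongrightarrow> J u" by blast
  have ge: "m \<le> J u" unfolding m_def using bdd ru(2) by (simp add: cInf_lower)
  have le: "J u \<le> m + 1 / real (Suc n)" for n
  proof (rule LIMSEQ_le_const2[OF ru(3)], intro exI allI impI)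
    fix k assume "n \<le> k"
    then have "n \<le> r k" using seq_suble[OF ru(1), of k] by simp
    then have "1 / real (Suc (r k)) \<le> 1 / real (Suc n)" by (simp add: frac_le)
    then show "J (U (r k)) \<le> m + 1 / real (Suc n)" using U(2)[of "r k"] by simp
  qed
  have um: "J u \<le> m"
  proof (rule ccontr)
    assume "\<not> J u \<le> m"
    then have "0 < J u - m" by simp
    then obtain n where "n > 0" "inverse (real n) < J u - m" using ex_inverse_of_nat_less by blast
    moreover have "1 / real (Suc n) \<le> inverse (real n)" using \<open>n > 0\<close> by (simp add: field_simps)
    ultimately show False using le[of n] by simp
  qed
  have "J u \<le> J w" if w: "w \<in> Cper N" "Q w" for w
  proof -
    define w' where "w' = (\<lambda>i j k. w i j k + (- w 1 1 1))"
    have w': "w' \<in> Cper N" "Q w'" "J w' = J w" "w' 1 1 1 = 0"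
      unfolding w'_def using inv[OF w, of "- w 1 1 1"] cper_fun1[OF w(1), of "\<lambda>x. x + - w 1 1 1"] by auto
    show ?thesis
    proof (cases "J w \<le> J u0")
      case True
      then have "w' \<in> T" unfolding T_def using w' by auto
      then show ?thesis using um bdd w'(3) unfolding m_def by (metis cInf_lower imageI order_trans)
    next
      case False
      have "J u \<le> J u0'" using um bdd u0'T unfolding m_def by (metis cInf_lower imageI order_trans)
      also have "J u0' \<le> J u0" using u0'T unfolding T_def by simp
      finally show ?thesis using False by simp
    qed
  qed
  then show ?thesis using ru(2) unfolding T_def by blast
qed


definition H :: "real \<Rightarrow> real" where "H y = y * ln y"
definition Fe :: "real \<Rightarrow> real" where "Fe x = H (1 + x) + H (1 - x)"
definition dF :: "real \<Rightarrow> real" where "dF x = ln (1 + x) - ln (1 - x)"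

lemma H_cont: "continuous_on {0..} H"
  unfolding continuous_on_def
proof
  fix x :: real assume x: "x \<in> {0..}"
  show "(H \<longlongrightarrow> H x) (at x within {0..})"
  proof (cases "x = 0")
    case True
    have "((\<lambda>x::real. x * ln x) \<longlongrightarrow> 0) (at_right 0)" by real_asymp
    then show ?thesis using True by (simp add: H_def[abs_def] at_within_Ici_at_right)
  next
    case False
    then have "x > 0" using x by simp
    then have "isCont H x" unfolding H_def[abs_def] by (intro continuous_intros) auto
    then show ?thesis using continuous_within isCont_def continuous_at_imp_continuous_at_within by metis
  qed
qed

lemma Fe_cont: "continuous_on {-1..1} Fe"
proof -
  have 1: "continuous_on {-1..1} (\<lambda>x. H (1 + x))"
    by (rule continuous_on_compose2[OF H_cont]) (auto intro!: continuous_intros)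
  have 2: "continuous_on {-1..1} (\<lambda>x. H (1 - x))"
    by (rule continuous_on_compose2[OF H_cont]) (auto intro!: continuous_intros)
  show ?thesis unfolding Fe_def[abs_def] using continuous_on_add[OF 1 2] by simp
qed

lemma Fe_tendsto:
  assumes "(f \<longlongrightarrow> l) F" "l \<in> {-1..1}" "\<forall>\<^sub>F x in F. f x \<in> {-1..1}"
  shows "((\<lambda>x. Fe (f x)) \<longlongrightarrow> Fe l) F"
  by (rule continuous_on_tendsto_compose[OF Fe_cont assms])

lemma H_ge: "0 \<le> y \<Longrightarrow> y - 1 \<le> H y"
proof (cases "y = 0")
  case False
  assume y: "0 \<le> y"
  then have yp: "0 < y" using False by simp
  have "ln (1 / y) \<le> 1 / y - 1" by (rule ln_le_minus_one) (use yp in simp)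
  then have "- ln y \<le> 1 / y - 1" using yp by (simp add: ln_div)
  then have "y * (- ln y) \<le> y * (1 / y - 1)" using yp by (intro mult_left_mono) auto
  then show ?thesis using yp by (simp add: H_def algebra_simps)
qed (simp add: H_def)

lemma Fe_nonneg: "\<bar>x\<bar> \<le> 1 \<Longrightarrow> 0 \<le> Fe x"
  using H_ge[of "1 + x"] H_ge[of "1 - x"] unfolding Fe_def by (simp add: abs_le_iff)

lemma H_tangent:
  assumes y: "0 < y" and z: "0 \<le> z"
  shows "H y + (ln y + 1) * (z - y) \<le> H z"
proof (cases "z = 0")
  case True then show ?thesis using y by (simp add: H_def algebra_simps)
next
  case False
  then have zp: "0 < z" using z by simp
  have "ln (y / z) \<le> y / z - 1" by (rule ln_le_minus_one) (use y zp in simp)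
  then have "ln y - ln z \<le> y / z - 1" using y zp by (simp add: ln_div)
  then have "z * (ln y - ln z) \<le> z * (y / z - 1)" using zp by (intro mult_left_mono) auto
  then show ?thesis using zp by (simp add: H_def algebra_simps)
qed

lemma Fe_tangent:
  assumes "\<bar>y\<bar> < 1" "\<bar>z\<bar> \<le> 1"
  shows "Fe y + dF y * (z - y) \<le> Fe z"
proof -
  have a: "H (1 + y) + (ln (1 + y) + 1) * ((1 + z) - (1 + y)) \<le> H (1 + z)"
    by (rule H_tangent) (use assms in auto)
  have b: "H (1 - y) + (ln (1 - y) + 1) * ((1 - z) - (1 - y)) \<le> H (1 - z)"
    by (rule H_tangent) (use assms in auto)
  show ?thesis using a b unfolding Fe_def dF_def by (simp add: algebra_simps)
qed

lemma dF_strict_mono: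
  assumes "\<bar>a\<bar> < 1" "\<bar>b\<bar> < 1" "a < b"
  shows "dF a < dF b"
proof -
  have "ln (1 + a) < ln (1 + b)" using assms by simp
  moreover have "ln (1 - b) < ln (1 - a)" using assms by simp
  ultimately show ?thesis unfolding dF_def by simp
qed

lemma dF_mono:
  assumes "\<bar>a\<bar> < 1" "\<bar>b\<bar> < 1" "a \<le> b"
  shows "dF a \<le> dF b"
  using dF_strict_mono[OF assms(1,2)] assms(3) by (cases "a = b") auto

lemma dF_monotone_prod:
  assumes "\<bar>a\<bar> < 1" "\<bar>b\<bar> < 1"
  shows "0 \<le> (a - b) * (dF a - dF b)" and "a \<noteq> b \<Longrightarrow> 0 < (a - b) * (dF a - dF b)"
proof -
  show "a \<noteq> b \<Longrightarrow> 0 < (a - b) * (dF a - dF b)"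
    using dF_strict_mono[OF assms(1,2)] dF_strict_mono[OF assms(2,1)]
    by (cases "a < b") (auto intro: mult_pos_pos mult_neg_neg)
  then show "0 \<le> (a - b) * (dF a - dF b)" by (cases "a = b") (auto intro: less_imp_le)
qed

lemma Fe_deriv:
  assumes "\<bar>y\<bar> < 1"
  shows "(Fe has_real_derivative dF y) (at y)"
proof -
  have p: "1 + y > 0" "1 - y > 0" using assms by auto
  have d1: "((\<lambda>x. (1 + x) * ln (1 + x)) has_real_derivative (ln (1 + y) + 1)) (at y)"
    by (rule derivative_eq_intros refl | use p in simp)+
  have d2: "((\<lambda>x. (1 - x) * ln (1 - x)) has_real_derivative (- ln (1 - y) - 1)) (at y)"
    by (rule derivative_eq_intros refl | use p in simp)+
  have "((\<lambda>x. (1 + x) * ln (1 + x) + (1 - x) * ln (1 - x)) has_real_derivative dF y) (at y)"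
    using DERIV_add[OF d1 d2] by (simp add: dF_def)
  then show ?thesis unfolding Fe_def[abs_def] H_def by simp
qed

lemma dF_ge0: "0 \<le> y \<Longrightarrow> y < 1 \<Longrightarrow> 0 \<le> dF y"
  unfolding dF_def by simp

lemma dF_lower: "0 < s \<Longrightarrow> s \<le> 1 \<Longrightarrow> - ln s \<le> dF (1 - s)"
  unfolding dF_def by simp

lemma Fe_even: "Fe (- x) = Fe x" unfolding Fe_def by simp


lemma chain1:
  fixes g :: "int \<Rightarrow> real"
  assumes d: "\<And>s. 1 \<le> s \<Longrightarrow> s < int N \<Longrightarrow> \<bar>g (s+1) - g s\<bar> \<le> D" and D: "0 \<le> D"
    and i: "i \<in> {1..int N}"
  shows "\<bar>g i - g 1\<bar> \<le> real N * D"
proof -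
  have m: "int m < int N \<longrightarrow> \<bar>g (1 + int m) - g 1\<bar> \<le> real m * D" for m
  proof (induction m)
    case 0 then show ?case by simp
  next
    case (Suc m)
    show ?case
    proof
      assume lt: "int (Suc m) < int N"
      have "\<bar>g (1 + int m + 1) - g (1 + int m)\<bar> \<le> D" by (rule d) (use lt in auto)
      moreover have "\<bar>g (1 + int m) - g 1\<bar> \<le> real m * D" using Suc lt by auto
      moreover have "1 + int (Suc m) = 1 + int m + 1" by simp
      ultimately show "\<bar>g (1 + int (Suc m)) - g 1\<bar> \<le> real (Suc m) * D"
        by (simp add: algebra_simps)
    qed
  qed
  define m where "m = nat (i - 1)"
  have im: "i = 1 + int m" "int m < int N" using i unfolding m_def by auto
  have "\<bar>g i - g 1\<bar> \<le> real m * D" using m[of m] im by simp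
  also have "\<dots> \<le> real N * D" using im(2) D by (intro mult_right_mono) auto
  finally show ?thesis .
qed

lemma S_ge_term:
  assumes "\<And>i j k. 0 \<le> f i j k" "(i,j,k) \<in> cells N"
  shows "f i j k \<le> S N f"
proof -
  have "(\<lambda>(i,j,k). f i j k) (i,j,k) \<le> (\<Sum>p\<in>cells N. (\<lambda>(i,j,k). f i j k) p)"
    by (rule member_le_sum) (use assms finite_cells in auto)
  then show ?thesis unfolding S_def by simp
qed

lemma diff_bound:
  assumes "Dir N u p q r \<le> E" "(i,j,k) \<in> cells N"
  shows "\<bar>u (i+p) (j+q) (k+r) - u i j k\<bar> \<le> sqrt E"
proof -
  have "(u (i+p) (j+q) (k+r) - u i j k)^2 \<le> Dir N u p q r"
    unfolding Dir_def by (rule S_ge_term[of "\<lambda>i j k. (u (i+p) (j+q) (k+r) - u i j k)^2"]) (use assms in auto)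
  then have "(u (i+p) (j+q) (k+r) - u i j k)^2 \<le> E" using assms by simp
  then show ?thesis using real_sqrt_le_mono by fastforce
qed

lemma grid_bound:
  assumes u0: "u 1 1 1 = 0" and E: "Dir N u 1 0 0 + Dir N u 0 1 0 + Dir N u 0 0 1 \<le> E"
    and c: "(i,j,k) \<in> cells N"
  shows "\<bar>u i j k\<bar> \<le> 3 * real N * sqrt E"
proof -
  have E1: "Dir N u 1 0 0 \<le> E" "Dir N u 0 1 0 \<le> E" "Dir N u 0 0 1 \<le> E"
    using E Dir_nonneg[of N u] by (smt (verit))+
  have sE: "0 \<le> sqrt E" using E1(1) Dir_nonneg[of N u 1 0 0] by simp
  have ijk: "i \<in> {1..int N}" "j \<in> {1..int N}" "k \<in> {1..int N}" using c unfolding cells_def by auto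
  have "\<bar>u i j k - u 1 j k\<bar> \<le> real N * sqrt E"
  proof (rule chain1[of N "\<lambda>s. u s j k"])
    fix s assume "1 \<le> s" "s < int N"
    then have "(s,j,k) \<in> cells N" using ijk unfolding cells_def by auto
    then show "\<bar>u (s + 1) j k - u s j k\<bar> \<le> sqrt E" using diff_bound[OF E1(1)] by fastforce
  qed (use sE ijk in auto)
  moreover have "\<bar>u 1 j k - u 1 1 k\<bar> \<le> real N * sqrt E"
  proof (rule chain1[of N "\<lambda>s. u 1 s k"])
    fix s assume "1 \<le> s" "s < int N"
    then have "(1,s,k) \<in> cells N" using ijk unfolding cells_def by auto
    then show "\<bar>u 1 (s + 1) k - u 1 s k\<bar> \<le> sqrt E" using diff_bound[OF E1(2)] by fastforce
  qed (use sE ijk in auto)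
  moreover have "\<bar>u 1 1 k - u 1 1 1\<bar> \<le> real N * sqrt E"
  proof (rule chain1[of N "\<lambda>s. u 1 1 s"])
    fix s assume "1 \<le> s" "s < int N"
    then have "(1,1,s) \<in> cells N" using ijk unfolding cells_def by auto
    then show "\<bar>u 1 1 (s + 1) - u 1 1 s\<bar> \<le> sqrt E" using diff_bound[OF E1(3)] by fastforce
  qed (use sE ijk in auto)
  ultimately show ?thesis using u0 by linarith
qed

lemma S_tendsto:
  assumes "\<And>i j k. (i,j,k) \<in> cells N \<Longrightarrow> (\<lambda>n. F n i j k) \<longlonglongrightarrow> G i j k"
  shows "(\<lambda>n. S N (F n)) \<longlonglongrightarrow> S N G"
  unfolding S_def
proof (rule tendsto_sum)
  fix p assume "p \<in> cells N"
  then obtain i j k where "p = (i,j,k)" "(i,j,k) \<in> cells N" by (cases p) auto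
  then show "(\<lambda>n. (\<lambda>(i,j,k). F n i j k) p) \<longlonglongrightarrow> (\<lambda>(i,j,k). G i j k) p" using assms by simp
qed

lemma lap_tendsto:
  assumes "\<And>i j k. (\<lambda>n. U n i j k) \<longlonglongrightarrow> u i j k"
  shows "(\<lambda>n. lap N L (U n) i j k) \<longlonglongrightarrow> lap N L u i j k"
  unfolding lap_def divide_inverse by (intro tendsto_intros assms)

lemma S_quad:
  "S N (\<lambda>i j k. (u i j k + t * v i j k) * (a i j k + t * b i j k)) =
   S N (\<lambda>i j k. u i j k * a i j k) + t * (S N (\<lambda>i j k. u i j k * b i j k) + S N (\<lambda>i j k. v i j k * a i j k))
   + t^2 * S N (\<lambda>i j k. v i j k * b i j k)"
proof -
  have "S N (\<lambda>i j k. (u i j k + t * v i j k) * (a i j k + t * b i j k)) =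
     S N (\<lambda>i j k. u i j k * a i j k + t * (u i j k * b i j k + v i j k * a i j k) + t^2 * (v i j k * b i j k))"
    by (rule S_cong) (simp add: algebra_simps power2_eq_square)
  then show ?thesis by (simp only: S_add S_cmult)
qed

lemma S_lin:
  "S N (\<lambda>i j k. f i j k * (u i j k + t * v i j k)) = S N (\<lambda>i j k. f i j k * u i j k) + t * S N (\<lambda>i j k. f i j k * v i j k)"
proof -
  have "S N (\<lambda>i j k. f i j k * (u i j k + t * v i j k)) = S N (\<lambda>i j k. f i j k * u i j k + t * (f i j k * v i j k))"
    by (rule S_cong) (simp add: algebra_simps)
  then show ?thesis by (simp only: S_add S_cmult)
qed

lemma S_sq_zero:
  assumes "S N (\<lambda>i j k. (v i j k)^2) = 0" "(i,j,k) \<in> cells N"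
  shows "v i j k = 0"
proof -
  have "(v i j k)^2 \<le> S N (\<lambda>i j k. (v i j k)^2)"
    by (rule S_ge_term[of "\<lambda>i j k. (v i j k)^2"]) (use assms in auto)
  then have "(v i j k)^2 \<le> 0" using assms by simp
  then show ?thesis by simp
qed

lemma gridh_pos: "L > 0 \<Longrightarrow> N > 0 \<Longrightarrow> gridh N L > 0" unfolding gridh_def by simp

lemma sqrt_quad_bound:
  fixes x a :: real
  assumes "0 \<le> x" "x^2 \<le> a * x" "0 \<le> a"
  shows "x \<le> a"
proof (cases "x = 0")
  case True
  then show ?thesis using assms by simp
next
  case False
  then have "x > 0" using assms by simp
  then show ?thesis using assms(2) by (simp add: power2_eq_square)
qed


lemma S_abs_mult_le:
  assumes "\<And>i j k. (i,j,k) \<in> cells N \<Longrightarrow> \<bar>u i j k\<bar> \<le> M"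
  shows "\<bar>S N (\<lambda>i j k. f i j k * u i j k)\<bar> \<le> S N (\<lambda>i j k. \<bar>f i j k\<bar>) * M"
proof -
  have "\<bar>S N (\<lambda>i j k. f i j k * u i j k)\<bar> \<le> S N (\<lambda>i j k. \<bar>f i j k * u i j k\<bar>)"
    unfolding S_def by (rule order_trans[OF sum_abs]) (simp add: split_def)
  also have "\<dots> \<le> S N (\<lambda>i j k. \<bar>f i j k\<bar> * M)"
    by (rule S_mono) (simp add: abs_mult assms mult_left_mono)
  also have "\<dots> = S N (\<lambda>i j k. \<bar>f i j k\<bar>) * M"
    using S_cmult[of N M "\<lambda>i j k. \<bar>f i j k\<bar>"] by (simp add: mult.commute)
  finally show ?thesis .
qed

lemma poisson:
  assumes N: "N > 0" and L: "L > 0" and f: "f \<in> Cper N" and Sf: "S N f = 0"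
  shows "\<exists>u\<in>Cper N. lap N L u = f"
proof -
  define h where "h = gridh N L"
  have h: "h > 0" unfolding h_def using gridh_pos[OF L N] .
  define J where "J = (\<lambda>u. - (1/2) * S N (\<lambda>i j k. u i j k * lap N L u i j k) + S N (\<lambda>i j k. f i j k * u i j k))"
  define F1 where "F1 = S N (\<lambda>i j k. \<bar>f i j k\<bar>)"
  have F1: "0 \<le> F1" unfolding F1_def by (rule S_nonneg) simp
  have "\<exists>u. u \<in> Cper N \<and> True \<and> (\<forall>w. w \<in> Cper N \<longrightarrow> True \<longrightarrow> J u \<le> J w)"
  proof (rule exists_min[of N "\<lambda>_. True" J "\<lambda>i j k. 0" "3 * real N * (2 * h^2 * 3 * real N * F1)"])
    show "N > 0" by (rule N)
    show "(\<lambda>i j k. 0::real) \<in> Cper N" by (rule cper_const)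
    show "True" ..
  next
    fix u :: grid and c :: real assume u: "u \<in> Cper N" "True"
    have "S N (\<lambda>i j k. (u i j k + c) * lap N L (\<lambda>i j k. u i j k + c) i j k)
        = S N (\<lambda>i j k. u i j k * lap N L u i j k) + c * S N (lap N L u)"
      unfolding lap_const by (simp only: S_add[symmetric] S_cmult[symmetric] distrib_right)
    moreover have "S N (\<lambda>i j k. f i j k * (u i j k + c)) = S N (\<lambda>i j k. f i j k * u i j k) + c * S N f"
      by (simp only: S_add[symmetric] S_cmult[symmetric] distrib_left) (simp add: mult.commute)
    ultimately show "True \<and> J (\<lambda>i j k. u i j k + c) = J u" unfolding J_def using S_lap[OF u(1)] Sf by simp
  next
    fix u :: grid and i j k
    assume u: "u \<in> Cper N" "True" "u 1 1 1 = 0" "J u \<le> J (\<lambda>i j k. 0)" and c: "(i,j,k) \<in> cells N"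
    define E where "E = Dir N u 1 0 0 + Dir N u 0 1 0 + Dir N u 0 0 1"
    have E0: "0 \<le> E" unfolding E_def using Dir_nonneg[of N u] by (simp add: add_nonneg_nonneg)
    have en: "S N (\<lambda>i j k. u i j k * lap N L u i j k) = - E / h^2" unfolding E_def h_def by (rule S_energy[OF u(1)])
    have gb: "\<And>i j k. (i,j,k) \<in> cells N \<Longrightarrow> \<bar>u i j k\<bar> \<le> 3 * real N * sqrt E"
      using grid_bound[of u N E, OF u(3)] unfolding E_def by blast
    have "J (\<lambda>i j k. 0) = 0" unfolding J_def lap_def by (simp add: S_const)
    then have "E / (2 * h^2) + S N (\<lambda>i j k. f i j k * u i j k) \<le> 0" using u(4) unfolding J_def en by simp
    moreover have "\<bar>S N (\<lambda>i j k. f i j k * u i j k)\<bar> \<le> F1 * (3 * real N * sqrt E)"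
      unfolding F1_def by (rule S_abs_mult_le) (rule gb)
    ultimately have "E / (2 * h^2) \<le> F1 * (3 * real N * sqrt E)" by linarith
    then have "E \<le> (2 * h^2 * 3 * real N * F1) * sqrt E" using h by (simp add: field_simps)
    then have q: "(sqrt E)^2 \<le> (2 * h^2 * 3 * real N * F1) * sqrt E" using E0 by simp
    have "sqrt E \<le> 2 * h^2 * 3 * real N * F1" by (rule sqrt_quad_bound[OF _ q]) (use F1 E0 h in auto)
    then have "3 * real N * sqrt E \<le> 3 * real N * (2 * h^2 * 3 * real N * F1)"
      by (intro mult_left_mono) auto
    then show "\<bar>u i j k\<bar> \<le> 3 * real N * (2 * h^2 * 3 * real N * F1)" using gb[OF c] by linarith
  next
    fix U :: "nat \<Rightarrow> grid" and u :: grid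
    assume U: "\<And>n. U n \<in> Cper N" "\<And>n. True" "u \<in> Cper N" "\<And>i j k. (\<lambda>n. U n i j k) \<longlonglongrightarrow> u i j k"
    have "(\<lambda>n. J (U n)) \<longlonglongrightarrow> J u" unfolding J_def
      by (intro tendsto_intros S_tendsto lap_tendsto U(4))
    then show "True \<and> (\<lambda>n. J (U n)) \<longlonglongrightarrow> J u" by simp
  qed
  then obtain u where u: "u \<in> Cper N" "\<And>w. w \<in> Cper N \<Longrightarrow> J u \<le> J w" by blast
  define v where "v = (\<lambda>i j k. lap N L u i j k - f i j k)"
  have v: "v \<in> Cper N" unfolding v_def by (intro cper_diff lap_per u f)
  define A where "A = - (1/2) * (S N (\<lambda>i j k. u i j k * lap N L v i j k) + S N (\<lambda>i j k. v i j k * lap N L u i j k))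
      + S N (\<lambda>i j k. f i j k * v i j k)"
  define B2 where "B2 = - (1/2) * S N (\<lambda>i j k. v i j k * lap N L v i j k)"
  have g: "J (\<lambda>i j k. u i j k + t * v i j k) = J u + t * A + t^2 * B2" for t
    unfolding J_def lap_lin S_quad S_lin A_def B2_def by (simp add: algebra_simps)
  have der: "((\<lambda>t. J u + t * A + t^2 * B2) has_real_derivative A) (at 0)"
    by (rule derivative_eq_intros refl | simp)+
  have "A = 0"
  proof (rule DERIV_local_min[OF der, of 1])
    show "\<forall>y. \<bar>0 - y\<bar> < 1 \<longrightarrow> J u + 0 * A + 0^2 * B2 \<le> J u + y * A + y^2 * B2"
    proof (intro allI impI)
      fix y :: real
      have "(\<lambda>i j k. u i j k + y * v i j k) \<in> Cper N" by (intro cper_add u(1) cper_fun1[OF v])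
      then have "J u \<le> J (\<lambda>i j k. u i j k + y * v i j k)" by (rule u(2))
      then show "J u + 0 * A + 0^2 * B2 \<le> J u + y * A + y^2 * B2" unfolding g by simp
    qed
  qed simp
  moreover have "A = - S N (\<lambda>i j k. (v i j k)^2)"
  proof -
    have "S N (\<lambda>i j k. u i j k * lap N L v i j k) = S N (\<lambda>i j k. v i j k * lap N L u i j k)"
      by (rule S_sym[OF u(1) v])
    moreover have "S N (\<lambda>i j k. (v i j k)^2) = S N (\<lambda>i j k. v i j k * lap N L u i j k) - S N (\<lambda>i j k. f i j k * v i j k)"
      unfolding S_diff[symmetric] by (rule S_cong) (simp add: v_def power2_eq_square algebra_simps)
    ultimately show ?thesis unfolding A_def by simp
  qed
  ultimately have "S N (\<lambda>i j k. (v i j k)^2) = 0" by simp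
  then have "\<forall>(i,j,k)\<in>cells N. v i j k = 0" using S_sq_zero by blast
  then have "v i j k = 0" for i j k using cper_zero[OF v N] by blast
  then have "lap N L u = f" unfolding v_def by (intro ext) simp
  then show ?thesis using u(1) by blast
qed


definition psi :: "nat \<Rightarrow> real \<Rightarrow> real \<Rightarrow> grid \<Rightarrow> grid \<Rightarrow> grid" where
  "psi N L dt \<phi>0 u = (\<lambda>i j k. \<phi>0 i j k + dt * lap N L u i j k)"

definition feas :: "nat \<Rightarrow> real \<Rightarrow> real \<Rightarrow> grid \<Rightarrow> grid \<Rightarrow> bool" where
  "feas N L dt \<phi>0 u \<longleftrightarrow> (\<forall>i j k. (i,j,k) \<in> cells N \<longrightarrow> \<bar>psi N L dt \<phi>0 u i j k\<bar> \<le> 1)"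

definition Kf :: "nat \<Rightarrow> real \<Rightarrow> real \<Rightarrow> real \<Rightarrow> real \<Rightarrow> grid \<Rightarrow> grid \<Rightarrow> real" where
  "Kf N L \<epsilon> \<theta> dt \<phi>0 u = S N (\<lambda>i j k. Fe (psi N L dt \<phi>0 u i j k))
     - \<theta> * S N (\<lambda>i j k. \<phi>0 i j k * psi N L dt \<phi>0 u i j k)
     - \<epsilon>^2 / 2 * S N (\<lambda>i j k. psi N L dt \<phi>0 u i j k * lap N L (psi N L dt \<phi>0 u) i j k)
     - dt / 2 * S N (\<lambda>i j k. u i j k * lap N L u i j k)"

lemma psi_lin: "psi N L dt \<phi>0 (\<lambda>i j k. u i j k + t * v i j k) =
   (\<lambda>i j k. psi N L dt \<phi>0 u i j k + t * (dt * lap N L v i j k))"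
  unfolding psi_def lap_lin by (intro ext) (simp add: distrib_left)

lemma lap_scale: "lap N L (\<lambda>i j k. c * f i j k) = (\<lambda>i j k. c * lap N L f i j k)"
  unfolding lap_def by (intro ext) (cases "gridh N L = 0"; simp add: field_simps)

lemma psi_per: "\<phi>0 \<in> Cper N \<Longrightarrow> u \<in> Cper N \<Longrightarrow> psi N L dt \<phi>0 u \<in> Cper N"
proof -
  assume a: "\<phi>0 \<in> Cper N" "u \<in> Cper N"
  have "(\<lambda>i j k. dt * lap N L u i j k) \<in> Cper N" by (rule cper_fun1[OF lap_per[OF a(2)]])
  then show ?thesis unfolding psi_def by (rule cper_add[OF a(1)])
qed

lemma Kf_expand:
  assumes a: "a = (\<lambda>i j k. dt * lap N L v i j k)" and p: "\<psi> = psi N L dt \<phi>0 u"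
  shows "Kf N L \<epsilon> \<theta> dt \<phi>0 (\<lambda>i j k. u i j k + t * v i j k) =
    S N (\<lambda>i j k. Fe (\<psi> i j k + t * a i j k))
    - \<theta> * (S N (\<lambda>i j k. \<phi>0 i j k * \<psi> i j k) + t * S N (\<lambda>i j k. \<phi>0 i j k * a i j k))
    - \<epsilon>^2 / 2 * (S N (\<lambda>i j k. \<psi> i j k * lap N L \<psi> i j k)
        + t * (S N (\<lambda>i j k. \<psi> i j k * lap N L a i j k) + S N (\<lambda>i j k. a i j k * lap N L \<psi> i j k))
        + t^2 * S N (\<lambda>i j k. a i j k * lap N L a i j k))
    - dt / 2 * (S N (\<lambda>i j k. u i j k * lap N L u i j k)
        + t * (S N (\<lambda>i j k. u i j k * lap N L v i j k) + S N (\<lambda>i j k. v i j k * lap N L u i j k))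
        + t^2 * S N (\<lambda>i j k. v i j k * lap N L v i j k))"
proof -
  have e: "psi N L dt \<phi>0 (\<lambda>i j k. u i j k + t * v i j k) = (\<lambda>i j k. \<psi> i j k + t * a i j k)"
    unfolding psi_lin a p ..
  show ?thesis unfolding Kf_def e lap_lin S_quad S_lin ..
qed

lemma Kf_at0:
  assumes p: "\<psi> = psi N L dt \<phi>0 u"
  shows "Kf N L \<epsilon> \<theta> dt \<phi>0 u = S N (\<lambda>i j k. Fe (\<psi> i j k)) - \<theta> * S N (\<lambda>i j k. \<phi>0 i j k * \<psi> i j k)
     - \<epsilon>^2 / 2 * S N (\<lambda>i j k. \<psi> i j k * lap N L \<psi> i j k) - dt / 2 * S N (\<lambda>i j k. u i j k * lap N L u i j k)"
  unfolding Kf_def p ..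

lemma gmean_S: "L > 0 \<Longrightarrow> N > 0 \<Longrightarrow> gmean N L \<nu> = S N \<nu> / real N ^ 3"
  unfolding gmean_def ip_def gridh_def S_def by (simp add: split_def field_simps)

lemma S_psi: "\<phi>0 \<in> Cper N \<Longrightarrow> u \<in> Cper N \<Longrightarrow> S N (psi N L dt \<phi>0 u) = S N \<phi>0"
  unfolding psi_def S_add S_cmult S_lap by simp


lemma main_min:
  fixes \<epsilon> \<theta> :: real
  assumes N: "N > 0" and L: "L > 0" and dt: "dt > 0" and \<phi>0: "\<phi>0 \<in> Cper N"
    and mean: "\<bar>S N \<phi>0 / real N ^ 3\<bar> < 1"
  shows "\<exists>u. u \<in> Cper N \<and> feas N L dt \<phi>0 u \<and>
           (\<forall>w. w \<in> Cper N \<longrightarrow> feas N L dt \<phi>0 w \<longrightarrow> Kf N L \<epsilon> \<theta> dt \<phi>0 u \<le> Kf N L \<epsilon> \<theta> dt \<phi>0 w)"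
proof -
  define h where "h = gridh N L"
  have h: "h > 0" unfolding h_def using gridh_pos[OF L N] .
  define m0 where "m0 = S N \<phi>0 / real N ^ 3"
  define f where "f = (\<lambda>i j k. (m0 - \<phi>0 i j k) / dt)"
  have f: "f \<in> Cper N" unfolding f_def by (rule cper_fun1[OF \<phi>0])
  have Sf: "S N f = 0"
  proof -
    have "S N f = (S N (\<lambda>i j k. m0) - S N \<phi>0) / dt"
      unfolding f_def by (simp only: S_divide S_diff)
    also have "\<dots> = 0" unfolding S_const m0_def using N by simp
    finally show ?thesis .
  qed
  obtain \<mu>0 where \<mu>0: "\<mu>0 \<in> Cper N" "lap N L \<mu>0 = f" using poisson[OF N L f Sf] by blast
  have psi0: "psi N L dt \<phi>0 \<mu>0 = (\<lambda>i j k. m0)" unfolding psi_def \<mu>0(2) f_def using dt by (intro ext) simp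
  have feas0: "feas N L dt \<phi>0 \<mu>0" unfolding feas_def psi0 using mean m0_def by simp
  define Phi1 where "Phi1 = S N (\<lambda>i j k. \<bar>\<phi>0 i j k\<bar>)"
  define C where "C = Kf N L \<epsilon> \<theta> dt \<phi>0 \<mu>0 + \<bar>\<theta>\<bar> * Phi1"
  show ?thesis
  proof (rule exists_min[of N "feas N L dt \<phi>0" "Kf N L \<epsilon> \<theta> dt \<phi>0" \<mu>0 "3 * real N * sqrt (2 * h^2 * C / dt)"])
    show "N > 0" by (rule N)
    show "\<mu>0 \<in> Cper N" by (rule \<mu>0(1))
    show "feas N L dt \<phi>0 \<mu>0" by (rule feas0)
  next
    fix u :: grid and c :: real assume u: "u \<in> Cper N" "feas N L dt \<phi>0 u"
    have p: "psi N L dt \<phi>0 (\<lambda>i j k. u i j k + c) = psi N L dt \<phi>0 u" unfolding psi_def lap_const ..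
    have "S N (\<lambda>i j k. (u i j k + c) * lap N L (\<lambda>i j k. u i j k + c) i j k)
        = S N (\<lambda>i j k. u i j k * lap N L u i j k) + c * S N (lap N L u)"
      unfolding lap_const by (simp only: S_add[symmetric] S_cmult[symmetric] distrib_right)
    then show "feas N L dt \<phi>0 (\<lambda>i j k. u i j k + c) \<and> Kf N L \<epsilon> \<theta> dt \<phi>0 (\<lambda>i j k. u i j k + c) = Kf N L \<epsilon> \<theta> dt \<phi>0 u"
      using u(2) S_lap[OF u(1)] unfolding feas_def Kf_def p by simp
  next
    fix u :: grid and i j k
    assume u: "u \<in> Cper N" "feas N L dt \<phi>0 u" "u 1 1 1 = 0" "Kf N L \<epsilon> \<theta> dt \<phi>0 u \<le> Kf N L \<epsilon> \<theta> dt \<phi>0 \<mu>0"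
      and c: "(i,j,k) \<in> cells N"
    define \<psi> where "\<psi> = psi N L dt \<phi>0 u"
    have \<psi>: "\<psi> \<in> Cper N" unfolding \<psi>_def by (rule psi_per[OF \<phi>0 u(1)])
    define E where "E = Dir N u 1 0 0 + Dir N u 0 1 0 + Dir N u 0 0 1"
    have en: "S N (\<lambda>i j k. u i j k * lap N L u i j k) = - E / h^2" unfolding E_def h_def by (rule S_energy[OF u(1)])
    have t1: "0 \<le> S N (\<lambda>i j k. Fe (\<psi> i j k))"
      using u(2) unfolding feas_def \<psi>_def by (intro S_nonneg Fe_nonneg) auto
    have "\<bar>S N (\<lambda>i j k. \<phi>0 i j k * \<psi> i j k)\<bar> \<le> Phi1 * 1"
      unfolding Phi1_def by (rule S_abs_mult_le) (use u(2) in \<open>auto simp: feas_def \<psi>_def\<close>)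
    then have t2: "- \<bar>\<theta>\<bar> * Phi1 \<le> - \<theta> * S N (\<lambda>i j k. \<phi>0 i j k * \<psi> i j k)"
      by (smt (verit, best) abs_le_iff abs_mult_less abs_of_nonneg abs_abs mult.commute mult_cancel_left2 mult_minus_left mult_right_mono abs_ge_zero)
    have t3: "\<epsilon>^2 / 2 * S N (\<lambda>i j k. \<psi> i j k * lap N L \<psi> i j k) \<le> 0"
      using S_energy_nonpos[OF \<psi>, of L] by (simp add: mult_nonneg_nonpos)
    have "Kf N L \<epsilon> \<theta> dt \<phi>0 u = S N (\<lambda>i j k. Fe (\<psi> i j k)) - \<theta> * S N (\<lambda>i j k. \<phi>0 i j k * \<psi> i j k)
        - \<epsilon>^2 / 2 * S N (\<lambda>i j k. \<psi> i j k * lap N L \<psi> i j k) + dt / 2 * (E / h^2)"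
      unfolding Kf_def \<psi>_def en by simp
    then have "dt / 2 * (E / h^2) \<le> C" using t1 t2 t3 u(4) unfolding C_def by linarith
    then have Eb: "E \<le> 2 * h^2 * C / dt" using h dt by (simp add: field_simps)
    have "\<bar>u i j k\<bar> \<le> 3 * real N * sqrt E" using grid_bound[of u N E, OF u(3) _ c] E_def by simp
    also have "\<dots> \<le> 3 * real N * sqrt (2 * h^2 * C / dt)" using Eb by (intro mult_left_mono) auto
    finally show "\<bar>u i j k\<bar> \<le> 3 * real N * sqrt (2 * h^2 * C / dt)" .
  next
    fix U :: "nat \<Rightarrow> grid" and u :: grid
    assume U: "\<And>n. U n \<in> Cper N" "\<And>n. feas N L dt \<phi>0 (U n)" "u \<in> Cper N" "\<And>i j k. (\<lambda>n. U n i j k) \<longlonglongrightarrow> u i j k"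
    have lp: "(\<lambda>n. lap N L (U n) i j k) \<longlonglongrightarrow> lap N L u i j k" for i j k by (rule lap_tendsto[OF U(4)])
    have pt: "(\<lambda>n. psi N L dt \<phi>0 (U n) i j k) \<longlonglongrightarrow> psi N L dt \<phi>0 u i j k" for i j k
      unfolding psi_def by (intro tendsto_intros lp)
    have fe: "feas N L dt \<phi>0 u" unfolding feas_def
    proof (intro allI impI)
      fix i j k assume c: "(i,j,k) \<in> cells N"
      show "\<bar>psi N L dt \<phi>0 u i j k\<bar> \<le> 1"
        by (rule LIMSEQ_le_const2[OF tendsto_rabs[OF pt]]) (use U(2) c in \<open>auto simp: feas_def\<close>)
    qed
    have pl: "(\<lambda>n. lap N L (psi N L dt \<phi>0 (U n)) i j k) \<longlonglongrightarrow> lap N L (psi N L dt \<phi>0 u) i j k" for i j k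
      by (rule lap_tendsto[OF pt])
    have fet: "(\<lambda>n. Fe (psi N L dt \<phi>0 (U n) i j k)) \<longlonglongrightarrow> Fe (psi N L dt \<phi>0 u i j k)" if c: "(i,j,k) \<in> cells N" for i j k
    proof (rule Fe_tendsto[OF pt])
      show "psi N L dt \<phi>0 u i j k \<in> {-1..1}" using fe c unfolding feas_def by (simp add: abs_le_iff)
      show "\<forall>\<^sub>F n in sequentially. psi N L dt \<phi>0 (U n) i j k \<in> {-1..1}"
        using U(2) c unfolding feas_def by (simp add: abs_le_iff)
    qed
    have "(\<lambda>n. Kf N L \<epsilon> \<theta> dt \<phi>0 (U n)) \<longlonglongrightarrow> Kf N L \<epsilon> \<theta> dt \<phi>0 u"
      unfolding Kf_def by (intro tendsto_intros S_tendsto fet pt pl lp U(4))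
    then show "feas N L dt \<phi>0 u \<and> (\<lambda>n. Kf N L \<epsilon> \<theta> dt \<phi>0 (U n)) \<longlonglongrightarrow> Kf N L \<epsilon> \<theta> dt \<phi>0 u"
      using fe by simp
  qed
qed


lemma boundary_contra:
  fixes G :: "'p \<Rightarrow> real \<Rightarrow> real"
  assumes fin: "finite I" and x0: "x0 \<in> I" and t1: "0 < t1" and \<alpha>: "0 < \<alpha>"
    and h: "\<And>t. 0 < t \<Longrightarrow> t \<le> t1 \<Longrightarrow> 0 \<le> (\<Sum>x\<in>I. G x t) + B1 + t * B2"
    and b1: "\<And>x t. x \<in> I \<Longrightarrow> x \<noteq> x0 \<Longrightarrow> 0 < t \<Longrightarrow> t \<le> t1 \<Longrightarrow> G x t \<le> Cp x"
    and b2: "\<And>t. 0 < t \<Longrightarrow> t \<le> t1 \<Longrightarrow> G x0 t \<le> \<alpha> * ln (t * \<alpha>)"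
  shows False
proof -
  define Ctot where "Ctot = (\<Sum>x\<in>I - {x0}. Cp x)"
  define R where "R = \<bar>Ctot\<bar> + \<bar>B1\<bar> + t1 * \<bar>B2\<bar> + 1"
  define t where "t = min t1 (exp (- R / \<alpha>) / \<alpha>)"
  have tpos: "0 < t" unfolding t_def using t1 \<alpha> by simp
  have tt1: "t \<le> t1" unfolding t_def by simp
  have "t * \<alpha> \<le> exp (- R / \<alpha>)" unfolding t_def using \<alpha>
    by (metis min.cobounded2 mult.commute pos_le_divide_eq)
  then have "ln (t * \<alpha>) \<le> - R / \<alpha>" using ln_le_cancel_iff[of "t * \<alpha>" "exp (- R / \<alpha>)"] tpos \<alpha> by simp
  then have lnb: "\<alpha> * ln (t * \<alpha>) \<le> - R" using \<alpha> by (simp add: field_simps)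
  have s1: "(\<Sum>x\<in>I. G x t) = G x0 t + (\<Sum>x\<in>I - {x0}. G x t)" by (rule sum.remove[OF fin x0])
  have s2: "(\<Sum>x\<in>I - {x0}. G x t) \<le> Ctot" unfolding Ctot_def
    by (rule sum_mono) (use b1 tpos tt1 in auto)
  have "(\<Sum>x\<in>I. G x t) \<le> \<alpha> * ln (t * \<alpha>) + Ctot" using b2[OF tpos tt1] s1 s2 by linarith
  moreover have "t * B2 \<le> t1 * \<bar>B2\<bar>"
  proof -
    have "t * B2 \<le> t * \<bar>B2\<bar>" using tpos by (intro mult_left_mono) auto
    also have "\<dots> \<le> t1 * \<bar>B2\<bar>" using tt1 by (intro mult_right_mono) auto
    finally show ?thesis .
  qed
  ultimately have "(\<Sum>x\<in>I. G x t) + B1 + t * B2 \<le> -1" using lnb unfolding R_def by linarith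
  then show False using h[OF tpos tt1] by linarith
qed


lemma closed_step:
  fixes P :: "int \<Rightarrow> int \<Rightarrow> int \<Rightarrow> bool"
  assumes cl: "\<And>i j k. P i j k \<Longrightarrow> P (i+1) j k \<and> P i (j+1) k \<and> P i j (k+1)"
    and P0: "P i0 j0 k0"
  shows "P (i0 + int a) (j0 + int b) (k0 + int c)"
proof -
  have A: "P (i0 + int a) j0 k0" for a
  proof (induction a)
    case 0 then show ?case using P0 by simp
  next
    case (Suc a) then show ?case using cl[of "i0 + int a" j0 k0] by (simp add: ac_simps)
  qed
  have B: "P (i0 + int a) (j0 + int b) k0" for a b
  proof (induction b)
    case 0 then show ?case using A by simp
  next
    case (Suc b) then show ?case using cl[of "i0 + int a" "j0 + int b" k0] by (simp add: ac_simps)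
  qed
  show ?thesis
  proof (induction c)
    case 0 then show ?case using B by simp
  next
    case (Suc c) then show ?case using cl[of "i0 + int a" "j0 + int b" "k0 + int c"] by (simp add: ac_simps)
  qed
qed

lemma closed_all:
  fixes P :: "int \<Rightarrow> int \<Rightarrow> int \<Rightarrow> bool"
  assumes per: "\<And>i j k. P (i + int N) j k = P i j k" "\<And>i j k. P i (j + int N) k = P i j k"
      "\<And>i j k. P i j (k + int N) = P i j k"
    and N: "N > 0" and P0: "P i0 j0 k0"
    and cl: "\<And>i j k. P i j k \<Longrightarrow> P (i+1) j k \<and> P i (j+1) k \<and> P i j (k+1)"
  shows "P i j k"
proof -
  define a where "a = nat ((i - i0) mod int N)"
  define b where "b = nat ((j - j0) mod int N)"
  define c where "c = nat ((k - k0) mod int N)"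
  have ia: "i = (i0 + int a) + int N * ((i - i0) div int N)"
  proof -
    have "int a = (i - i0) mod int N" unfolding a_def using N by simp
    then show ?thesis using mod_mult_div_eq[of "i - i0" "int N"] by linarith
  qed
  have jb: "j = (j0 + int b) + int N * ((j - j0) div int N)"
  proof -
    have "int b = (j - j0) mod int N" unfolding b_def using N by simp
    then show ?thesis using mod_mult_div_eq[of "j - j0" "int N"] by linarith
  qed
  have kc: "k = (k0 + int c) + int N * ((k - k0) div int N)"
  proof -
    have "int c = (k - k0) mod int N" unfolding c_def using N by simp
    then show ?thesis using mod_mult_div_eq[of "k - k0" "int N"] by linarith
  qed
  have "P i j k = P (i0 + int a) j k"
    by (subst ia, rule per1d[of "\<lambda>x. P x j k"]) (rule per(1))
  also have "\<dots> = P (i0 + int a) (j0 + int b) k"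
    by (subst jb, rule per1d[of "\<lambda>x. P (i0 + int a) x k"]) (rule per(2))
  also have "\<dots> = P (i0 + int a) (j0 + int b) (k0 + int c)"
    by (subst kc, rule per1d[of "\<lambda>x. P (i0 + int a) (j0 + int b) x"]) (rule per(3))
  finally show ?thesis using closed_step[of P, OF cl P0] by blast
qed

lemma exists_boundary_cell:
  assumes N: "N > 0" and \<psi>: "\<psi> \<in> Cper N" and c: "(i,j,k) \<in> cells N" "\<psi> i j k = 1"
    and mean: "S N \<psi> < real N ^ 3"
  shows "\<exists>i0 j0 k0. (i0,j0,k0) \<in> cells N \<and> \<psi> i0 j0 k0 = 1 \<and>
           (\<psi> (i0+1) j0 k0 \<noteq> 1 \<or> \<psi> i0 (j0+1) k0 \<noteq> 1 \<or> \<psi> i0 j0 (k0+1) \<noteq> 1)"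
proof (rule ccontr)
  assume "\<not> ?thesis"
  then have cl0: "\<And>i j k. (i,j,k) \<in> cells N \<Longrightarrow> \<psi> i j k = 1 \<Longrightarrow>
       \<psi> (i+1) j k = 1 \<and> \<psi> i (j+1) k = 1 \<and> \<psi> i j (k+1) = 1" by blast
  have w1: "(\<lambda>i j k. \<psi> (i+1) (j+0) (k+0)) \<in> Cper N" by (rule cper_shift[OF \<psi>])
  have w2: "(\<lambda>i j k. \<psi> (i+0) (j+1) (k+0)) \<in> Cper N" by (rule cper_shift[OF \<psi>])
  have w3: "(\<lambda>i j k. \<psi> (i+0) (j+0) (k+1)) \<in> Cper N" by (rule cper_shift[OF \<psi>])
  have cl: "\<psi> (i+1) j k = 1 \<and> \<psi> i (j+1) k = 1 \<and> \<psi> i j (k+1) = 1" if "\<psi> i j k = 1" for i j k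
  proof -
    have r: "\<psi> (rep N i) (rep N j) (rep N k) = 1" using that cper_rep[OF \<psi>, of i j k] by simp
    have "\<psi> (rep N i + 1) (rep N j) (rep N k) = 1 \<and> \<psi> (rep N i) (rep N j + 1) (rep N k) = 1
       \<and> \<psi> (rep N i) (rep N j) (rep N k + 1) = 1" by (rule cl0[OF rep_cells[OF N] r])
    then show ?thesis using cper_rep[OF w1, of i j k] cper_rep[OF w2, of i j k] cper_rep[OF w3, of i j k] by simp
  qed
  have all: "\<psi> i' j' k' = 1" for i' j' k'
    by (rule closed_all[of "\<lambda>i j k. \<psi> i j k = 1" N i j k]) (use cper_i[OF \<psi>] cper_j[OF \<psi>] cper_k[OF \<psi>] N c cl in auto)
  have "S N \<psi> = S N (\<lambda>i j k. 1)" by (rule S_cong) (simp add: all)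
  then show False using mean by (simp add: S_const)
qed

lemma lap_v_bounds:
  assumes v01: "\<And>i j k. v i j k = 0 \<or> v i j k = 1" and h: "gridh N L > 0"
  shows "v i j k = 1 \<Longrightarrow> - 6 / (gridh N L)^2 \<le> lap N L v i j k \<and> lap N L v i j k \<le> 0"
    and "v i j k = 0 \<Longrightarrow> 0 \<le> lap N L v i j k \<and> lap N L v i j k \<le> 6 / (gridh N L)^2"
    and "v i j k = 1 \<Longrightarrow> (v (i+1) j k = 0 \<or> v i (j+1) k = 0 \<or> v i j (k+1) = 0) \<Longrightarrow>
           lap N L v i j k \<le> - 1 / (gridh N L)^2"
proof -
  define n where "n = v (i+1) j k + v (i-1) j k + v i (j+1) k + v i (j-1) k + v i j (k+1) + v i j (k-1)"
  have l: "lap N L v i j k = (n - 6 * v i j k) / (gridh N L)^2" unfolding lap_def n_def by simp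
  have b: "0 \<le> v p q r \<and> v p q r \<le> 1" for p q r using v01[of p q r] by auto
  have n: "0 \<le> n" "n \<le> 6" unfolding n_def using b by (smt (verit))+
  have h2: "(gridh N L)^2 > 0" using h by simp
  show "v i j k = 1 \<Longrightarrow> - 6 / (gridh N L)^2 \<le> lap N L v i j k \<and> lap N L v i j k \<le> 0"
    unfolding l using n h2 by (simp add: divide_simps)
  show "v i j k = 0 \<Longrightarrow> 0 \<le> lap N L v i j k \<and> lap N L v i j k \<le> 6 / (gridh N L)^2"
    unfolding l using n h2 by (simp add: divide_simps)
  assume 1: "v i j k = 1" and z: "v (i+1) j k = 0 \<or> v i (j+1) k = 0 \<or> v i j (k+1) = 0"
  have "n \<le> 5" using z b unfolding n_def by (smt (verit))
  then show "lap N L v i j k \<le> - 1 / (gridh N L)^2" unfolding l using 1 h2 by (simp add: divide_simps)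
qed


lemma interior_upper:
  fixes \<epsilon> \<theta> :: real
  assumes N: "N > 0" and L: "L > 0" and dt: "dt > 0" and \<phi>0: "\<phi>0 \<in> Cper N" and mean: "S N \<phi>0 < real N ^ 3"
    and u: "u \<in> Cper N" "feas N L dt \<phi>0 u"
    and min: "\<And>w. w \<in> Cper N \<Longrightarrow> feas N L dt \<phi>0 w \<Longrightarrow> Kf N L \<epsilon> \<theta> dt \<phi>0 u \<le> Kf N L \<epsilon> \<theta> dt \<phi>0 w"
    and c: "(i,j,k) \<in> cells N"
  shows "psi N L dt \<phi>0 u i j k < 1"
proof (rule ccontr)
  assume nlt: "\<not> psi N L dt \<phi>0 u i j k < 1"
  define \<psi> where "\<psi> = psi N L dt \<phi>0 u"
  have \<psi>: "\<psi> \<in> Cper N" unfolding \<psi>_def by (rule psi_per[OF \<phi>0 u(1)])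
  have fe: "\<And>i j k. (i,j,k) \<in> cells N \<Longrightarrow> \<bar>\<psi> i j k\<bar> \<le> 1" using u(2) unfolding feas_def \<psi>_def by blast
  have c1: "\<psi> i j k = 1" using nlt fe[OF c] unfolding \<psi>_def by simp
  have S\<psi>: "S N \<psi> < real N ^ 3" using S_psi[OF \<phi>0 u(1)] mean unfolding \<psi>_def by simp
  obtain i0 j0 k0 where x0: "(i0,j0,k0) \<in> cells N" "\<psi> i0 j0 k0 = 1"
      "\<psi> (i0+1) j0 k0 \<noteq> 1 \<or> \<psi> i0 (j0+1) k0 \<noteq> 1 \<or> \<psi> i0 j0 (k0+1) \<noteq> 1"
    using exists_boundary_cell[OF N \<psi> c c1 S\<psi>] by blast
  define h where "h = gridh N L"
  have h: "h > 0" unfolding h_def using gridh_pos[OF L N] .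
  define v where "v = (\<lambda>i j k. if \<psi> i j k = 1 then 1 else (0::real))"
  have v: "v \<in> Cper N" unfolding v_def by (rule cper_fun1[OF \<psi>])
  have v01: "\<And>i j k. v i j k = 0 \<or> v i j k = 1" unfolding v_def by simp
  define a where "a = (\<lambda>i j k. dt * lap N L v i j k)"
  define cc where "cc = 6 * dt / h^2"
  have cc: "cc > 0" unfolding cc_def using dt h by simp
  have a1: "\<psi> i j k = 1 \<Longrightarrow> - cc \<le> a i j k \<and> a i j k \<le> 0" for i j k
  proof -
    assume "\<psi> i j k = 1"
    then have "v i j k = 1" unfolding v_def by simp
    then have "- 6 / h^2 \<le> lap N L v i j k \<and> lap N L v i j k \<le> 0"
      using lap_v_bounds(1)[where v=v and N=N and L=L, OF v01] h unfolding h_def by blast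
    then have l: "- 6 / h^2 \<le> lap N L v i j k" "lap N L v i j k \<le> 0" by auto
    have "dt * (- 6 / h^2) \<le> dt * lap N L v i j k" using l(1) dt by (intro mult_left_mono) auto
    moreover have "dt * lap N L v i j k \<le> 0" using l(2) dt by (simp add: mult_nonneg_nonpos)
    moreover have "dt * (- 6 / h^2) = - cc" unfolding cc_def by simp
    ultimately show ?thesis unfolding a_def by simp
  qed
  have a2: "\<psi> i j k \<noteq> 1 \<Longrightarrow> 0 \<le> a i j k \<and> a i j k \<le> cc" for i j k
  proof -
    assume "\<psi> i j k \<noteq> 1"
    then have "v i j k = 0" unfolding v_def by simp
    then have "0 \<le> lap N L v i j k \<and> lap N L v i j k \<le> 6 / h^2"
      using lap_v_bounds(2)[where v=v and N=N and L=L, OF v01] h unfolding h_def by blast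
    then have l: "0 \<le> lap N L v i j k" "lap N L v i j k \<le> 6 / h^2" by auto
    have "dt * lap N L v i j k \<le> dt * (6 / h^2)" using l(2) dt by (intro mult_left_mono) auto
    moreover have "0 \<le> dt * lap N L v i j k" using l(1) dt by simp
    moreover have "dt * (6 / h^2) = cc" unfolding cc_def by simp
    ultimately show ?thesis unfolding a_def by simp
  qed
  define \<alpha> where "\<alpha> = - a i0 j0 k0"
  have \<alpha>: "0 < \<alpha>" "\<alpha> \<le> cc"
  proof -
    have "v i0 j0 k0 = 1" using x0(2) unfolding v_def by simp
    moreover have "v (i0+1) j0 k0 = 0 \<or> v i0 (j0+1) k0 = 0 \<or> v i0 j0 (k0+1) = 0" using x0(3) unfolding v_def by auto
    ultimately have "lap N L v i0 j0 k0 \<le> - 1 / h^2" using lap_v_bounds(3)[where v=v and N=N and L=L, OF v01] h unfolding h_def by blast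
    then have "dt * lap N L v i0 j0 k0 \<le> dt * (- 1 / h^2)" using dt by (intro mult_left_mono) auto
    moreover have "dt * (- 1 / h^2) < 0" using dt h by (simp add: mult_pos_neg)
    ultimately show "0 < \<alpha>" unfolding \<alpha>_def a_def by linarith
    show "\<alpha> \<le> cc" unfolding \<alpha>_def using a1[OF x0(2)] by simp
  qed
  define dl where "dl = (\<lambda>(i,j,k). if \<psi> i j k < 1 then 1 - \<psi> i j k else (1::real))"
  define \<delta> where "\<delta> = Min (dl ` cells N)"
  have fin: "finite (cells N)" by (rule finite_cells)
  have ne: "cells N \<noteq> {}" using c by blast
  have \<delta>pos: "0 < \<delta>" unfolding \<delta>_def using fin ne by (auto simp: dl_def split: if_splits)
  have \<delta>le: "\<delta> \<le> dl (i,j,k)" if "(i,j,k) \<in> cells N" for i j k unfolding \<delta>_def using fin that by simp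
  have \<delta>1: "\<delta> \<le> 1" using \<delta>le[OF x0(1)] x0(2) unfolding dl_def by simp
  define t1 where "t1 = \<delta> / (2 * cc)"
  have t1: "0 < t1" unfolding t1_def using \<delta>pos cc by simp
  have tc: "t * cc \<le> \<delta> / 2" if "t \<le> t1" "0 < t" for t
    using that cc unfolding t1_def by (simp add: field_simps)
  have pos1: "1/2 \<le> \<psi> i j k + t * a i j k \<and> \<psi> i j k + t * a i j k \<le> 1 \<and> (a i j k \<noteq> 0 \<longrightarrow> \<psi> i j k + t * a i j k < 1)"
    if "\<psi> i j k = 1" "0 < t" "t \<le> t1" for i j k t
  proof -
    have "- cc \<le> a i j k" "a i j k \<le> 0" using a1[OF that(1)] by auto
    moreover have "t * cc \<le> 1/2" using tc[OF that(3,2)] \<delta>1 by simp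
    moreover have "t * (- cc) \<le> t * a i j k" using \<open>- cc \<le> a i j k\<close> that(2) by (intro mult_left_mono) auto
    moreover have "a i j k \<noteq> 0 \<longrightarrow> t * a i j k < 0" using \<open>a i j k \<le> 0\<close> that(2) by (simp add: mult_pos_neg)
    moreover have "t * a i j k \<le> 0" using \<open>a i j k \<le> 0\<close> that(2) by (simp add: mult_nonneg_nonpos)
    ultimately show ?thesis using that(1) by auto
  qed
  have pos2: "-1 \<le> \<psi> i j k + t * a i j k \<and> \<psi> i j k + t * a i j k < 1 \<and> (a i j k \<noteq> 0 \<longrightarrow> -1 < \<psi> i j k + t * a i j k)"
    if "(i,j,k) \<in> cells N" "\<psi> i j k \<noteq> 1" "0 < t" "t \<le> t1" for i j k t
  proof -
    have lt: "\<psi> i j k < 1" using fe[OF that(1)] that(2) by auto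
    have ge: "-1 \<le> \<psi> i j k" using fe[OF that(1)] by auto
    have d: "\<delta> \<le> 1 - \<psi> i j k" using \<delta>le[OF that(1)] lt unfolding dl_def by simp
    have "0 \<le> a i j k" "a i j k \<le> cc" using a2[OF that(2)] by auto
    moreover have "t * a i j k \<le> t * cc" using \<open>a i j k \<le> cc\<close> that(3) by (intro mult_left_mono) auto
    moreover have "a i j k \<noteq> 0 \<longrightarrow> 0 < t * a i j k" using \<open>0 \<le> a i j k\<close> that(3) by simp
    moreover have "0 \<le> t * a i j k" using \<open>0 \<le> a i j k\<close> that(3) by simp
    ultimately show ?thesis using tc[OF that(4,3)] d lt ge \<delta>pos by auto
  qed
  have inside: "\<bar>\<psi> i j k + t * a i j k\<bar> \<le> 1 \<and> (a i j k \<noteq> 0 \<longrightarrow> \<bar>\<psi> i j k + t * a i j k\<bar> < 1)"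
    if "(i,j,k) \<in> cells N" "0 < t" "t \<le> t1" for i j k t
  proof (cases "\<psi> i j k = 1")
    case True then show ?thesis using pos1[OF True that(2,3)] by auto
  next
    case False then show ?thesis using pos2[OF that(1) False that(2,3)] by auto
  qed
  define G where "G = (\<lambda>(i,j,k) t. if a i j k = 0 then 0 else a i j k * dF (\<psi> i j k + t * a i j k))"
  define B1 where "B1 = - \<theta> * S N (\<lambda>i j k. \<phi>0 i j k * a i j k)
     - \<epsilon>^2 / 2 * (S N (\<lambda>i j k. \<psi> i j k * lap N L a i j k) + S N (\<lambda>i j k. a i j k * lap N L \<psi> i j k))
     - dt / 2 * (S N (\<lambda>i j k. u i j k * lap N L v i j k) + S N (\<lambda>i j k. v i j k * lap N L u i j k))"
  define B2 where "B2 = - (\<epsilon>^2 / 2 * S N (\<lambda>i j k. a i j k * lap N L a i j k)) - dt / 2 * S N (\<lambda>i j k. v i j k * lap N L v i j k)"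
  have hineq: "0 \<le> (\<Sum>p\<in>cells N. G p t) + B1 + t * B2" if t: "0 < t" "t \<le> t1" for t
  proof -
    have wC: "(\<lambda>i j k. u i j k + t * v i j k) \<in> Cper N" by (rule cper_add[OF u(1) cper_fun1[OF v]])
    have wF: "feas N L dt \<phi>0 (\<lambda>i j k. u i j k + t * v i j k)"
      unfolding feas_def psi_lin using inside t unfolding \<psi>_def a_def by blast
    have K: "Kf N L \<epsilon> \<theta> dt \<phi>0 (\<lambda>i j k. u i j k + t * v i j k) = Kf N L \<epsilon> \<theta> dt \<phi>0 u
        + (S N (\<lambda>i j k. Fe (\<psi> i j k + t * a i j k)) - S N (\<lambda>i j k. Fe (\<psi> i j k))) + t * B1 + t^2 * B2"
      unfolding Kf_expand[OF a_def \<psi>_def] Kf_at0[OF \<psi>_def] B1_def B2_def by (simp add: algebra_simps)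
    have Fd: "Fe (\<psi> i j k + t * a i j k) - Fe (\<psi> i j k) \<le> t * G (i,j,k) t" if c: "(i,j,k) \<in> cells N" for i j k
    proof (cases "a i j k = 0")
      case True then show ?thesis unfolding G_def by simp
    next
      case False
      have y: "\<bar>\<psi> i j k + t * a i j k\<bar> < 1" using inside[OF c t] False by blast
      have "Fe (\<psi> i j k + t * a i j k) + dF (\<psi> i j k + t * a i j k) * (\<psi> i j k - (\<psi> i j k + t * a i j k)) \<le> Fe (\<psi> i j k)"
        by (rule Fe_tangent[OF y fe[OF c]])
      then show ?thesis unfolding G_def using False by (simp add: algebra_simps)
    qed
    have "S N (\<lambda>i j k. Fe (\<psi> i j k + t * a i j k)) - S N (\<lambda>i j k. Fe (\<psi> i j k)) \<le> S N (\<lambda>i j k. t * G (i,j,k) t)"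
      unfolding S_diff[symmetric] by (rule S_mono) (rule Fd)
    also have "\<dots> = t * (\<Sum>p\<in>cells N. G p t)" unfolding S_cmult unfolding S_def by (simp add: split_def)
    finally have "0 \<le> t * (\<Sum>p\<in>cells N. G p t) + t * B1 + t^2 * B2" using min[OF wC wF] K by linarith
    then have "0 \<le> t * ((\<Sum>p\<in>cells N. G p t) + B1 + t * B2)" by (simp add: algebra_simps power2_eq_square)
    then show ?thesis using t(1) by (simp add: zero_le_mult_iff)
  qed
  define Cp where "Cp = (\<lambda>(i,j,k). if \<psi> i j k < 1 \<and> a i j k \<noteq> 0 then a i j k * dF (\<psi> i j k + t1 * a i j k) else 0)"
  have b1: "G p t \<le> Cp p" if p: "p \<in> cells N" "0 < t" "t \<le> t1" for p t
  proof -
    obtain i j k where pe: "p = (i,j,k)" by (cases p) auto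
    have c: "(i,j,k) \<in> cells N" using p pe by simp
    show ?thesis
    proof (cases "a i j k = 0")
      case True then show ?thesis unfolding G_def Cp_def pe by simp
    next
      case False
      show ?thesis
      proof (cases "\<psi> i j k = 1")
        case True
        have "a i j k < 0" using a1[OF True] False by auto
        moreover have "0 \<le> dF (\<psi> i j k + t * a i j k)" using pos1[OF True p(2,3)] False by (intro dF_ge0) auto
        ultimately have "a i j k * dF (\<psi> i j k + t * a i j k) \<le> 0" by (simp add: mult_nonpos_nonneg)
        then show ?thesis unfolding G_def Cp_def pe using True False by simp
      next
        case ne1: False
        have ap: "0 < a i j k" using a2[OF ne1] False by auto
        have lt: "\<psi> i j k < 1" using fe[OF c] ne1 by auto
        have y1: "\<bar>\<psi> i j k + t * a i j k\<bar> < 1" using inside[OF c p(2,3)] False by blast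
        have y2: "\<bar>\<psi> i j k + t1 * a i j k\<bar> < 1" using inside[OF c t1 order_refl] False by blast
        have "t * a i j k \<le> t1 * a i j k" using p(3) ap by (intro mult_right_mono) auto
        then have "dF (\<psi> i j k + t * a i j k) \<le> dF (\<psi> i j k + t1 * a i j k)" by (intro dF_mono[OF y1 y2]) simp
        then have "a i j k * dF (\<psi> i j k + t * a i j k) \<le> a i j k * dF (\<psi> i j k + t1 * a i j k)"
          using ap by (intro mult_left_mono) auto
        then show ?thesis unfolding G_def Cp_def pe using lt False by simp
      qed
    qed
  qed
  have b2: "G (i0,j0,k0) t \<le> \<alpha> * ln (t * \<alpha>)" if t: "0 < t" "t \<le> t1" for t
  proof -
    have an: "a i0 j0 k0 \<noteq> 0" using \<alpha>(1) unfolding \<alpha>_def by simp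
    define s where "s = t * \<alpha>"
    have s: "0 < s" "s \<le> 1" unfolding s_def using t \<alpha> tc[OF t(2,1)] \<delta>1
      by (auto intro: order_trans[OF mult_left_mono[OF \<alpha>(2)]])
    have e: "\<psi> i0 j0 k0 + t * a i0 j0 k0 = 1 - s" unfolding s_def \<alpha>_def using x0(2) by simp
    have "- ln s \<le> dF (1 - s)" by (rule dF_lower[OF s])
    then have "\<alpha> * (- ln s) \<le> \<alpha> * dF (1 - s)" using \<alpha>(1) by (intro mult_left_mono) auto
    then show ?thesis unfolding G_def using an e by (simp add: s_def \<alpha>_def)
  qed
  show False
    by (rule boundary_contra[OF fin x0(1) t1 \<alpha>(1), of G B1 B2 Cp]) (use hineq b1 b2 in auto)
qed


lemma psi_neg: "psi N L dt (\<lambda>i j k. - \<phi>0 i j k) (\<lambda>i j k. - u i j k) = (\<lambda>i j k. - psi N L dt \<phi>0 u i j k)"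
  unfolding psi_def lap_neg by (intro ext) simp

lemma Kf_neg: "Kf N L \<epsilon> \<theta> dt (\<lambda>i j k. - \<phi>0 i j k) (\<lambda>i j k. - u i j k) = Kf N L \<epsilon> \<theta> dt \<phi>0 u"
  unfolding Kf_def psi_neg lap_neg by (simp add: Fe_even)

lemma feas_neg: "feas N L dt (\<lambda>i j k. - \<phi>0 i j k) (\<lambda>i j k. - u i j k) = feas N L dt \<phi>0 u"
  unfolding feas_def psi_neg by simp

lemma interior_lower:
  fixes \<epsilon> \<theta> :: real
  assumes N: "N > 0" and L: "L > 0" and dt: "dt > 0" and \<phi>0: "\<phi>0 \<in> Cper N" and mean: "- (real N ^ 3) < S N \<phi>0"
    and u: "u \<in> Cper N" "feas N L dt \<phi>0 u"
    and min: "\<And>w. w \<in> Cper N \<Longrightarrow> feas N L dt \<phi>0 w \<Longrightarrow> Kf N L \<epsilon> \<theta> dt \<phi>0 u \<le> Kf N L \<epsilon> \<theta> dt \<phi>0 w"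
    and c: "(i,j,k) \<in> cells N"
  shows "-1 < psi N L dt \<phi>0 u i j k"
proof -
  have "psi N L dt (\<lambda>i j k. - \<phi>0 i j k) (\<lambda>i j k. - u i j k) i j k < 1"
  proof (rule interior_upper[OF N L dt _ _ _ _ _ c, where \<epsilon>=\<epsilon> and \<theta>=\<theta>])
    show "(\<lambda>i j k. - \<phi>0 i j k) \<in> Cper N" by (rule cper_fun1[OF \<phi>0])
    show "S N (\<lambda>i j k. - \<phi>0 i j k) < real N ^ 3" using mean by (simp add: S_neg)
    show "(\<lambda>i j k. - u i j k) \<in> Cper N" by (rule cper_fun1[OF u(1)])
    show "feas N L dt (\<lambda>i j k. - \<phi>0 i j k) (\<lambda>i j k. - u i j k)" using u(2) by (simp add: feas_neg)
    fix w assume w: "w \<in> Cper N" "feas N L dt (\<lambda>i j k. - \<phi>0 i j k) w"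
    have ww: "(\<lambda>i j k. - (- w i j k)) = w" by simp
    have w': "(\<lambda>i j k. - w i j k) \<in> Cper N" by (rule cper_fun1[OF w(1)])
    have "feas N L dt (\<lambda>i j k. - \<phi>0 i j k) (\<lambda>i j k. - (- w i j k))" using w(2) ww by simp
    then have wf: "feas N L dt \<phi>0 (\<lambda>i j k. - w i j k)" by (simp only: feas_neg)
    have "Kf N L \<epsilon> \<theta> dt (\<lambda>i j k. - \<phi>0 i j k) (\<lambda>i j k. - u i j k) = Kf N L \<epsilon> \<theta> dt \<phi>0 u" by (rule Kf_neg)
    also have "\<dots> \<le> Kf N L \<epsilon> \<theta> dt \<phi>0 (\<lambda>i j k. - w i j k)" by (rule min[OF w' wf])
    also have "\<dots> = Kf N L \<epsilon> \<theta> dt (\<lambda>i j k. - \<phi>0 i j k) (\<lambda>i j k. - (- w i j k))" by (rule Kf_neg[symmetric])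
    also have "\<dots> = Kf N L \<epsilon> \<theta> dt (\<lambda>i j k. - \<phi>0 i j k) w" using ww by simp
    finally show "Kf N L \<epsilon> \<theta> dt (\<lambda>i j k. - \<phi>0 i j k) (\<lambda>i j k. - u i j k) \<le> Kf N L \<epsilon> \<theta> dt (\<lambda>i j k. - \<phi>0 i j k) w" .
  qed
  then show ?thesis unfolding psi_neg by simp
qed

lemma deriv_S_Fe:
  assumes "\<And>i j k. (i,j,k) \<in> cells N \<Longrightarrow> \<bar>\<psi> i j k\<bar> < 1"
  shows "((\<lambda>t. S N (\<lambda>i j k. Fe (\<psi> i j k + t * a i j k))) has_real_derivative S N (\<lambda>i j k. dF (\<psi> i j k) * a i j k)) (at 0)"
  unfolding S_def
proof (rule DERIV_sum)
  fix p assume p: "p \<in> cells N"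
  obtain i j k where pe: "p = (i,j,k)" by (cases p) auto
  have c: "(i,j,k) \<in> cells N" using p pe by simp
  have d1: "((\<lambda>t. \<psi> i j k + t * a i j k) has_real_derivative a i j k) (at 0)"
    by (rule derivative_eq_intros refl | simp)+
  have d2: "(Fe has_real_derivative dF (\<psi> i j k)) (at (\<psi> i j k + 0 * a i j k))"
    using Fe_deriv[OF assms[OF c]] by simp
  have "((\<lambda>t. Fe (\<psi> i j k + t * a i j k)) has_real_derivative dF (\<psi> i j k) * a i j k) (at 0)"
    by (rule DERIV_chain2[OF d2 d1])
  then show "((\<lambda>t. (\<lambda>(i,j,k). Fe (\<psi> i j k + t * a i j k)) p) has_real_derivative (\<lambda>(i,j,k). dF (\<psi> i j k) * a i j k) p) (at 0)"
    unfolding pe by simp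
qed


lemma stationary:
  fixes \<epsilon> \<theta> :: real
  assumes N: "N > 0" and L: "L > 0" and dt: "dt > 0" and \<phi>0: "\<phi>0 \<in> Cper N"
    and u: "u \<in> Cper N" "feas N L dt \<phi>0 u"
    and min: "\<And>w. w \<in> Cper N \<Longrightarrow> feas N L dt \<phi>0 w \<Longrightarrow> Kf N L \<epsilon> \<theta> dt \<phi>0 u \<le> Kf N L \<epsilon> \<theta> dt \<phi>0 w"
    and int: "\<And>i j k. (i,j,k) \<in> cells N \<Longrightarrow> \<bar>psi N L dt \<phi>0 u i j k\<bar> < 1"
    and \<psi>_def: "\<psi> = psi N L dt \<phi>0 u"
    and W_def: "W = (\<lambda>i j k. dF (\<psi> i j k) - \<theta> * \<phi>0 i j k - \<epsilon>^2 * lap N L \<psi> i j k)"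
  shows "lap N L W = lap N L u"
proof -
  have \<psi>: "\<psi> \<in> Cper N" unfolding \<psi>_def by (rule psi_per[OF \<phi>0 u(1)])
  have l\<psi>: "lap N L \<psi> \<in> Cper N" by (rule lap_per[OF \<psi>])
  have W: "W \<in> Cper N" unfolding W_def
    by (intro cper_diff cper_fun1[OF \<psi>] cper_fun1[OF \<phi>0] cper_fun1[OF l\<psi>])
  define z where "z = (\<lambda>i j k. W i j k - u i j k)"
  have z: "z \<in> Cper N" unfolding z_def by (rule cper_diff[OF W u(1)])
  define v where "v = lap N L z"
  have v: "v \<in> Cper N" unfolding v_def by (rule lap_per[OF z])
  have lv: "lap N L v \<in> Cper N" by (rule lap_per[OF v])
  define a where "a = (\<lambda>i j k. dt * lap N L v i j k)"
  define P0 where "P0 = S N (\<lambda>i j k. \<phi>0 i j k * \<psi> i j k)"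
  define P1 where "P1 = S N (\<lambda>i j k. \<phi>0 i j k * a i j k)"
  define R0 where "R0 = S N (\<lambda>i j k. \<psi> i j k * lap N L \<psi> i j k)"
  define R1 where "R1 = S N (\<lambda>i j k. \<psi> i j k * lap N L a i j k) + S N (\<lambda>i j k. a i j k * lap N L \<psi> i j k)"
  define R2 where "R2 = S N (\<lambda>i j k. a i j k * lap N L a i j k)"
  define U0 where "U0 = S N (\<lambda>i j k. u i j k * lap N L u i j k)"
  define U1 where "U1 = S N (\<lambda>i j k. u i j k * lap N L v i j k) + S N (\<lambda>i j k. v i j k * lap N L u i j k)"
  define U2 where "U2 = S N (\<lambda>i j k. v i j k * lap N L v i j k)"
  define E where "E = (\<lambda>t. S N (\<lambda>i j k. Fe (\<psi> i j k + t * a i j k)) - \<theta> * (P0 + t * P1)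
      - \<epsilon>^2 / 2 * (R0 + t * R1 + t^2 * R2) - dt / 2 * (U0 + t * U1 + t^2 * U2))"
  have KE: "Kf N L \<epsilon> \<theta> dt \<phi>0 (\<lambda>i j k. u i j k + t * v i j k) = E t" for t
    unfolding Kf_expand[OF a_def \<psi>_def] E_def P0_def P1_def R0_def R1_def R2_def U0_def U1_def U2_def ..
  define D where "D = S N (\<lambda>i j k. dF (\<psi> i j k) * a i j k) - \<theta> * P1 - \<epsilon>^2 / 2 * R1 - dt / 2 * U1"
  have d0: "((\<lambda>t. S N (\<lambda>i j k. Fe (\<psi> i j k + t * a i j k))) has_real_derivative S N (\<lambda>i j k. dF (\<psi> i j k) * a i j k)) (at 0)"
    by (rule deriv_S_Fe) (use int \<psi>_def in blast)
  have d1: "((\<lambda>t. - \<theta> * (P0 + t * P1) - \<epsilon>^2 / 2 * (R0 + t * R1 + t^2 * R2) - dt / 2 * (U0 + t * U1 + t^2 * U2))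
       has_real_derivative (- \<theta> * P1 - \<epsilon>^2 / 2 * R1 - dt / 2 * U1)) (at 0)"
    by (rule derivative_eq_intros refl | simp add: algebra_simps)+
  have dE: "(E has_real_derivative D) (at 0)"
  proof -
    have "((\<lambda>t. S N (\<lambda>i j k. Fe (\<psi> i j k + t * a i j k)) + (- \<theta> * (P0 + t * P1) - \<epsilon>^2 / 2 * (R0 + t * R1 + t^2 * R2) - dt / 2 * (U0 + t * U1 + t^2 * U2)))
       has_real_derivative (S N (\<lambda>i j k. dF (\<psi> i j k) * a i j k) + (- \<theta> * P1 - \<epsilon>^2 / 2 * R1 - dt / 2 * U1))) (at 0)"
      by (rule DERIV_add[OF d0 d1])
    moreover have "(\<lambda>t. S N (\<lambda>i j k. Fe (\<psi> i j k + t * a i j k)) + (- \<theta> * (P0 + t * P1) - \<epsilon>^2 / 2 * (R0 + t * R1 + t^2 * R2) - dt / 2 * (U0 + t * U1 + t^2 * U2))) = E"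
      unfolding E_def by (intro ext) (simp add: algebra_simps)
    moreover have "S N (\<lambda>i j k. dF (\<psi> i j k) * a i j k) + (- \<theta> * P1 - \<epsilon>^2 / 2 * R1 - dt / 2 * U1) = D"
      unfolding D_def by (simp add: algebra_simps)
    ultimately show ?thesis by simp
  qed
  define m where "m = Max ((\<lambda>(i,j,k). \<bar>\<psi> i j k\<bar>) ` cells N)"
  have fin: "finite (cells N)" by (rule finite_cells)
  have ne: "cells N \<noteq> {}" using rep_cells[OF N, of 0 0 0] by blast
  have m1: "m < 1" unfolding m_def using fin ne int \<psi>_def by auto
  have mge: "\<bar>\<psi> i j k\<bar> \<le> m" if "(i,j,k) \<in> cells N" for i j k
    unfolding m_def using fin that by (intro Max_ge) force+
  define A where "A = S N (\<lambda>i j k. \<bar>a i j k\<bar>)"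
  have A0: "0 \<le> A" unfolding A_def by (rule S_nonneg) simp
  have age: "\<bar>a i j k\<bar> \<le> A" if "(i,j,k) \<in> cells N" for i j k
    unfolding A_def by (rule S_ge_term[of "\<lambda>i j k. \<bar>a i j k\<bar>"]) (use that in auto)
  define \<delta> where "\<delta> = (1 - m) / (A + 1)"
  have \<delta>: "0 < \<delta>" unfolding \<delta>_def using m1 A0 by simp
  have "D = 0"
  proof (rule DERIV_local_min[OF dE \<delta>], intro allI impI)
    fix y :: real assume y: "\<bar>0 - y\<bar> < \<delta>"
    have wC: "(\<lambda>i j k. u i j k + y * v i j k) \<in> Cper N" by (rule cper_add[OF u(1) cper_fun1[OF v]])
    have wF: "feas N L dt \<phi>0 (\<lambda>i j k. u i j k + y * v i j k)"
      unfolding feas_def psi_lin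
    proof (intro allI impI)
      fix i j k assume c: "(i,j,k) \<in> cells N"
      have "\<bar>y * a i j k\<bar> \<le> \<delta> * A" unfolding abs_mult
        using y age[OF c] \<delta> by (intro mult_mono) auto
      moreover have "\<delta> * A < 1 - m" unfolding \<delta>_def using m1 A0 by (simp add: field_simps)
      ultimately have "\<bar>\<psi> i j k + y * a i j k\<bar> < 1" using mge[OF c] by linarith
      then show "\<bar>psi N L dt \<phi>0 u i j k + y * (dt * lap N L v i j k)\<bar> \<le> 1" unfolding \<psi>_def a_def by simp
    qed
    have "E 0 = Kf N L \<epsilon> \<theta> dt \<phi>0 u" using KE[of 0] by simp
    also have "\<dots> \<le> Kf N L \<epsilon> \<theta> dt \<phi>0 (\<lambda>i j k. u i j k + y * v i j k)" by (rule min[OF wC wF])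
    also have "\<dots> = E y" by (rule KE)
    finally show "E 0 \<le> E y" .
  qed
  have la: "lap N L a = (\<lambda>i j k. dt * lap N L (lap N L v) i j k)" unfolding a_def by (rule lap_scale)
  have e1: "S N (\<lambda>i j k. dF (\<psi> i j k) * a i j k) = dt * S N (\<lambda>i j k. dF (\<psi> i j k) * lap N L v i j k)"
    unfolding a_def S_cmult[symmetric] by (rule S_cong) (simp add: algebra_simps)
  have e2: "P1 = dt * S N (\<lambda>i j k. \<phi>0 i j k * lap N L v i j k)"
    unfolding P1_def a_def S_cmult[symmetric] by (rule S_cong) (simp add: algebra_simps)
  have e3a: "S N (\<lambda>i j k. \<psi> i j k * lap N L a i j k) = dt * S N (\<lambda>i j k. \<psi> i j k * lap N L (lap N L v) i j k)"
    unfolding la S_cmult[symmetric] by (rule S_cong) (simp add: algebra_simps)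
  have e3b: "S N (\<lambda>i j k. \<psi> i j k * lap N L (lap N L v) i j k) = S N (\<lambda>i j k. lap N L v i j k * lap N L \<psi> i j k)"
    by (rule S_sym[OF \<psi> lv])
  have e4: "S N (\<lambda>i j k. a i j k * lap N L \<psi> i j k) = dt * S N (\<lambda>i j k. lap N L v i j k * lap N L \<psi> i j k)"
    unfolding a_def S_cmult[symmetric] by (rule S_cong) (simp add: algebra_simps)
  have e5: "S N (\<lambda>i j k. u i j k * lap N L v i j k) = S N (\<lambda>i j k. v i j k * lap N L u i j k)"
    by (rule S_sym[OF u(1) v])
  have e6: "S N (\<lambda>i j k. W i j k * lap N L v i j k) = S N (\<lambda>i j k. dF (\<psi> i j k) * lap N L v i j k)
      - \<theta> * S N (\<lambda>i j k. \<phi>0 i j k * lap N L v i j k) - \<epsilon>^2 * S N (\<lambda>i j k. lap N L v i j k * lap N L \<psi> i j k)"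
    unfolding S_cmult[symmetric] S_diff[symmetric] W_def by (rule S_cong) (simp add: algebra_simps)
  have e7: "S N (\<lambda>i j k. W i j k * lap N L v i j k) = S N (\<lambda>i j k. v i j k * lap N L W i j k)"
    by (rule S_sym[OF W v])
  have lz: "lap N L W = (\<lambda>i j k. v i j k + lap N L u i j k)"
    unfolding v_def z_def lap_diff by (intro ext) simp
  have e8: "S N (\<lambda>i j k. v i j k * lap N L W i j k) = S N (\<lambda>i j k. (v i j k)^2) + S N (\<lambda>i j k. v i j k * lap N L u i j k)"
    unfolding lz S_add[symmetric] by (rule S_cong) (simp add: algebra_simps power2_eq_square)
  have h0: "S N (\<lambda>i j k. dF (\<psi> i j k) * lap N L v i j k) = S N (\<lambda>i j k. (v i j k)^2)
      + S N (\<lambda>i j k. v i j k * lap N L u i j k) + \<theta> * S N (\<lambda>i j k. \<phi>0 i j k * lap N L v i j k)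
      + \<epsilon>^2 * S N (\<lambda>i j k. lap N L v i j k * lap N L \<psi> i j k)"
    using e6 e7 e8 by linarith
  have "D = dt * S N (\<lambda>i j k. (v i j k)^2)"
    unfolding D_def R1_def U1_def e1 e2 e3a e3b e4 e5 h0 by (simp add: algebra_simps)
  then have S0: "S N (\<lambda>i j k. (v i j k)^2) = 0" using \<open>D = 0\<close> dt by simp
  have "v i j k = 0" for i j k
    by (rule cper_zero[OF v N]) (use S_sq_zero[OF S0] in blast)
  then show ?thesis using lz by (intro ext) simp
qed


lemma S_ge_term_cells:
  assumes "\<And>i j k. (i,j,k) \<in> cells N \<Longrightarrow> 0 \<le> f i j k" "(i,j,k) \<in> cells N"
  shows "f i j k \<le> S N f"
proof -
  have "(\<lambda>(i,j,k). f i j k) (i,j,k) \<le> (\<Sum>p\<in>cells N. (\<lambda>(i,j,k). f i j k) p)"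
    by (rule member_le_sum) (use assms finite_cells in auto)
  then show ?thesis unfolding S_def by simp
qed

lemma scheme_parts:
  assumes "scheme N L \<epsilon> \<theta> dt \<phi>0 \<phi>1 \<mu>1" "dt > 0"
  shows "\<phi>1 i j k - \<phi>0 i j k = dt * lap N L \<mu>1 i j k"
    and "\<mu>1 i j k = dF (\<phi>1 i j k) - \<theta> * \<phi>0 i j k - \<epsilon>^2 * lap N L \<phi>1 i j k"
proof -
  have "(\<phi>1 i j k - \<phi>0 i j k) / dt = lap N L \<mu>1 i j k" using assms(1) unfolding scheme_def by blast
  then show "\<phi>1 i j k - \<phi>0 i j k = dt * lap N L \<mu>1 i j k" using assms(2) by (simp add: field_simps)
  show "\<mu>1 i j k = dF (\<phi>1 i j k) - \<theta> * \<phi>0 i j k - \<epsilon>^2 * lap N L \<phi>1 i j k"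
    using assms(1) unfolding scheme_def dF_def by simp
qed

lemma uniq:
  fixes \<epsilon> \<theta> :: real
  assumes N: "N > 0" and dt: "dt > 0"
    and a: "\<phi>a \<in> Cper N" "\<mu>a \<in> Cper N" "scheme N L \<epsilon> \<theta> dt \<phi>0 \<phi>a \<mu>a" "\<And>i j k. (i,j,k) \<in> cells N \<Longrightarrow> \<bar>\<phi>a i j k\<bar> < 1"
    and b: "\<phi>b \<in> Cper N" "\<mu>b \<in> Cper N" "scheme N L \<epsilon> \<theta> dt \<phi>0 \<phi>b \<mu>b" "\<And>i j k. (i,j,k) \<in> cells N \<Longrightarrow> \<bar>\<phi>b i j k\<bar> < 1"
  shows "\<phi>a = \<phi>b"
proof -
  define e where "e = (\<lambda>i j k. \<phi>a i j k - \<phi>b i j k)"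
  define m where "m = (\<lambda>i j k. \<mu>a i j k - \<mu>b i j k)"
  have e: "e \<in> Cper N" unfolding e_def by (rule cper_diff[OF a(1) b(1)])
  have m: "m \<in> Cper N" unfolding m_def by (rule cper_diff[OF a(2) b(2)])
  have em: "e i j k = dt * lap N L m i j k" for i j k
    unfolding e_def m_def lap_diff using scheme_parts(1)[OF a(3) dt, of i j k] scheme_parts(1)[OF b(3) dt, of i j k]
    by (simp add: algebra_simps)
  have me: "m i j k = (dF (\<phi>a i j k) - dF (\<phi>b i j k)) - \<epsilon>^2 * lap N L e i j k" for i j k
    unfolding e_def m_def lap_diff using scheme_parts(2)[OF a(3) dt, of i j k] scheme_parts(2)[OF b(3) dt, of i j k]
    by (simp add: algebra_simps)
  define T where "T = (\<lambda>i j k. e i j k * (dF (\<phi>a i j k) - dF (\<phi>b i j k)))"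
  have T0: "0 \<le> T i j k" if "(i,j,k) \<in> cells N" for i j k
    unfolding T_def e_def by (rule dF_monotone_prod(1)[OF a(4)[OF that] b(4)[OF that]])
  have "S N (\<lambda>i j k. e i j k * m i j k) = dt * S N (\<lambda>i j k. m i j k * lap N L m i j k)"
    unfolding S_cmult[symmetric] by (rule S_cong) (simp add: em algebra_simps)
  also have "\<dots> \<le> 0" using S_energy_nonpos[OF m, of L] dt by (simp add: mult_nonneg_nonpos)
  finally have s1: "S N (\<lambda>i j k. e i j k * m i j k) \<le> 0" .
  have "S N (\<lambda>i j k. e i j k * m i j k) = S N T - \<epsilon>^2 * S N (\<lambda>i j k. e i j k * lap N L e i j k)"
    unfolding S_cmult[symmetric] S_diff[symmetric] T_def by (rule S_cong) (simp add: me algebra_simps)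
  moreover have "\<epsilon>^2 * S N (\<lambda>i j k. e i j k * lap N L e i j k) \<le> 0"
    using S_energy_nonpos[OF e, of L] by (simp add: mult_nonneg_nonpos)
  ultimately have sT: "S N T \<le> 0" using s1 by linarith
  have "\<phi>a i j k = \<phi>b i j k" if c: "(i,j,k) \<in> cells N" for i j k
  proof (rule ccontr)
    assume ne: "\<phi>a i j k \<noteq> \<phi>b i j k"
    have "0 < T i j k" unfolding T_def e_def by (rule dF_monotone_prod(2)[OF a(4)[OF c] b(4)[OF c] ne])
    moreover have "T i j k \<le> S N T" by (rule S_ge_term_cells[OF T0 c])
    ultimately show False using sT by linarith
  qed
  then show ?thesis using cper_eq[OF a(1) b(1) N] by blast
qed

lemma supnorm_less:
  assumes "N > 0"
  shows "supnorm N \<nu> < 1 \<longleftrightarrow> (\<forall>i j k. (i,j,k) \<in> cells N \<longrightarrow> \<bar>\<nu> i j k\<bar> < 1)"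
proof -
  have fin: "finite (cells N)" by (rule finite_cells)
  have ne: "cells N \<noteq> {}" using rep_cells[OF assms, of 0 0 0] by blast
  show ?thesis unfolding supnorm_def using fin ne by auto
qed

theorem theorem2p3:
  fixes N :: nat and L \<epsilon> \<theta>\<^sub>0 dt M :: real and \<phi>0 :: grid
  assumes "L > 0" and "N > 0" and "\<epsilon> > 0" and "\<theta>\<^sub>0 > 0" and "dt > 0" and "M > 0"
    and "\<phi>0 \<in> Cper N"
    and "supnorm N \<phi>0 \<le> M"
    and "\<bar>gmean N L \<phi>0\<bar> < 1"
  shows "\<exists>!\<phi>1. \<phi>1 \<in> Cper N \<and> (\<exists>\<mu>1 \<in> Cper N. scheme N L \<epsilon> \<theta>\<^sub>0 dt \<phi>0 \<phi>1 \<mu>1)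
            \<and> (\<lambda>i j k. \<phi>1 i j k - gmean N L \<phi>0) \<in> Cper0 N L
            \<and> supnorm N \<phi>1 < 1"
proof -
  note L = assms(1) and N = assms(2) and dt = assms(5) and \<phi>0 = assms(7)
  have gm: "gmean N L \<phi>0 = S N \<phi>0 / real N ^ 3" by (rule gmean_S[OF L N])
  have N3: "real N ^ 3 > 0" using N by simp
  have mean: "\<bar>S N \<phi>0 / real N ^ 3\<bar> < 1" using assms(9) gm by simp
  have mup: "S N \<phi>0 < real N ^ 3" and mlo: "- (real N ^ 3) < S N \<phi>0"
    using mean N3 by (auto simp: abs_less_iff field_simps)
  obtain u where u: "u \<in> Cper N" "feas N L dt \<phi>0 u"
    and min: "\<And>w. w \<in> Cper N \<Longrightarrow> feas N L dt \<phi>0 w \<Longrightarrow> Kf N L \<epsilon> \<theta>\<^sub>0 dt \<phi>0 u \<le> Kf N L \<epsilon> \<theta>\<^sub>0 dt \<phi>0 w"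
    using main_min[OF N L dt \<phi>0 mean, of \<epsilon> \<theta>\<^sub>0] by blast
  define \<psi> where "\<psi> = psi N L dt \<phi>0 u"
  have \<psi>: "\<psi> \<in> Cper N" unfolding \<psi>_def by (rule psi_per[OF \<phi>0 u(1)])
  have int: "\<bar>\<psi> i j k\<bar> < 1" if c: "(i,j,k) \<in> cells N" for i j k
    using interior_upper[OF N L dt \<phi>0 mup u min c] interior_lower[OF N L dt \<phi>0 mlo u min c]
    unfolding \<psi>_def by auto
  define W where "W = (\<lambda>i j k. dF (\<psi> i j k) - \<theta>\<^sub>0 * \<phi>0 i j k - \<epsilon>^2 * lap N L \<psi> i j k)"
  have lW: "lap N L W = lap N L u"
  proof (rule stationary[OF N L dt \<phi>0 u min _ \<psi>_def W_def])
    fix i j k assume "(i,j,k) \<in> cells N"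
    then have "\<bar>\<psi> i j k\<bar> < 1" by (rule int)
    then show "\<bar>psi N L dt \<phi>0 u i j k\<bar> < 1" unfolding \<psi>_def .
  qed
  have l\<psi>: "lap N L \<psi> \<in> Cper N" by (rule lap_per[OF \<psi>])
  have W: "W \<in> Cper N" unfolding W_def
    by (intro cper_diff cper_fun1[OF \<psi>] cper_fun1[OF \<phi>0] cper_fun1[OF l\<psi>])
  have sch: "scheme N L \<epsilon> \<theta>\<^sub>0 dt \<phi>0 \<psi> W"
    unfolding scheme_def
  proof (intro conjI allI)
    fix i j k
    show "(\<psi> i j k - \<phi>0 i j k) / dt = lap N L W i j k" unfolding lW \<psi>_def psi_def using dt by simp
    show "W i j k = ln (1 + \<psi> i j k) - ln (1 - \<psi> i j k) - \<theta>\<^sub>0 * \<phi>0 i j k - \<epsilon>^2 * lap N L \<psi> i j k"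
      unfolding W_def dF_def ..
  qed
  have c0: "(\<lambda>i j k. \<psi> i j k - gmean N L \<phi>0) \<in> Cper0 N L"
    unfolding Cper0_def
  proof (intro CollectI conjI)
    show "(\<lambda>i j k. \<psi> i j k - gmean N L \<phi>0) \<in> Cper N" by (rule cper_fun1[OF \<psi>])
    have "S N \<psi> = S N \<phi>0" unfolding \<psi>_def by (rule S_psi[OF \<phi>0 u(1)])
    then show "gmean N L (\<lambda>i j k. \<psi> i j k - gmean N L \<phi>0) = 0"
      unfolding gmean_S[OF L N] S_diff S_const gm using N3 by simp
  qed
  have sn: "supnorm N \<psi> < 1" unfolding supnorm_less[OF N] using int by blast
  show ?thesis
  proof (rule ex1I[of _ \<psi>])
    show "\<psi> \<in> Cper N \<and> (\<exists>\<mu>1\<in>Cper N. scheme N L \<epsilon> \<theta>\<^sub>0 dt \<phi>0 \<psi> \<mu>1) \<and>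
        (\<lambda>i j k. \<psi> i j k - gmean N L \<phi>0) \<in> Cper0 N L \<and> supnorm N \<psi> < 1"
      using \<psi> W sch c0 sn by blast
  next
    fix y assume y: "y \<in> Cper N \<and> (\<exists>\<mu>1\<in>Cper N. scheme N L \<epsilon> \<theta>\<^sub>0 dt \<phi>0 y \<mu>1) \<and>
        (\<lambda>i j k. y i j k - gmean N L \<phi>0) \<in> Cper0 N L \<and> supnorm N y < 1"
    then obtain \<mu>y where \<mu>y: "\<mu>y \<in> Cper N" "scheme N L \<epsilon> \<theta>\<^sub>0 dt \<phi>0 y \<mu>y" by blast
    have yint: "\<And>i j k. (i,j,k) \<in> cells N \<Longrightarrow> \<bar>y i j k\<bar> < 1" using y supnorm_less[OF N] by blast
    show "y = \<psi>" by (rule uniq[OF N dt _ \<mu>y yint \<psi> W sch int]) (use y in blast)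
  qed
qed


end
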